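(* Let $p\ge0$, $\Omega>0$, $S\in\mathcal B_\Omega$, $x\in[0,\pi]$, $f\in m$, and $q_{ni}(x)=(\tilde Q(x)T^{-1}f)_{ni}$. Then $\{q_{n0}(x)-q_{n1}(x)\}_{n\ge1}\in l_1$ and $$\sum_{n\ge1}|q_{n0}(x)-q_{n1}(x)|\le C\|f\|_m,$$ where $C$ depends only on $p$ and $\Omega$.
   Context: $\mathcal S_p$: collections $S=\{\lambda_n,\alpha_n\}_{n\ge1}$ of complex numbers with $\rho_n:=\sqrt{\lambda_n}$ ($\arg\rho_n\in[-\pi/2,\pi/2)$), $\rho_n=n-p-1+\varkappa_n$, $\alpha_n=2/\pi+\kappa_n$, $\{\varkappa_n\},\{\kappa_n\}\in l_2$. Model data: $\tilde\rho_n=0$ for $n\le p+1$, $\tilde\rho_n=n-p-1$ for $n\ge p+1$, $\tilde\lambda_n=\tilde\rho_n^2$; $\tilde\alpha_1=1/\pi$, $\tilde\alpha_n=0$ for $2\le n\le p+1$, $\tilde\alpha_n=2/\pi$ for $n\ge p+2$. $\xi_n=|\rho_n-\tilde\rho_n|+|\alpha_n-\tilde\alpha_n|$, $\mathcal B_\Omega=\{S\in\mathcal S_p:(\sum\xi_n^2)^{1/2}\le\Omega\}$. Notation: $\lambda_{n0}=\lambda_n,\rho_{n0}=\rho_n,\alpha_{n0}=\alpha_n$, $\lambda_{n1}=\tilde\lambda_n,\rho_{n1}=\tilde\rho_n,\alpha_{n1}=\tilde\alpha_n$, $\hat\rho_n=\rho_n-\tilde\rho_n$; $\tilde D(x,\lambda,\mu)=\int_0^x\cos(\sqrt\lambda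 t)\cos(\sqrt\mu t)dt$; $\tilde Q_{ni,kj}(x)=\alpha_{kj}\tilde D(x,\rho_{ni}^2,\rho_{kj}^2)$; $\tilde Q_{nk}=\begin{pmatrix}\tilde Q_{n0,k0}&-\tilde Q_{n0,k1}\\ \tilde Q_{n1,k0}&-\tilde Q_{n1,k1}\end{pmatrix}$; $T_k^{-1}=\begin{pmatrix}\hat\rho_k&1\\0&1\end{pmatrix}$. $m$: Banach space of bounded sequences $f=(f_{ni})_{n\ge1,i=0,1}$ with sup norm. For $f\in m$, $(T^{-1}f)_n=(\hat\rho_nf_{n0}+f_{n1},f_{n1})^T$ and $(\tilde Q(x)T^{-1}f)_n=\sum_{k\ge1}\tilde Q_{nk}(x)T_k^{-1}f_k$, $f_k=(f_{k0},f_{k1})^T$; $(\cdot)_{ni}$ denotes the $i$-th component of the $n$-th block. *)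

theory Defs
  imports "HOL-Analysis.Analysis"
begin

text \<open>Square root with the paper's branch: arg in [-pi/2, pi/2).
  Library csqrt has arg in (-pi/2, pi/2]; we flip the purely imaginary upper case.\<close>
definition psqrt :: "complex \<Rightarrow> complex" where
  "psqrt z = (if Re (csqrt z) = 0 \<and> Im (csqrt z) > 0 then - csqrt z else csqrt z)"

definition rho_t :: "nat \<Rightarrow> nat \<Rightarrow> real" where
  "rho_t p n = (if n \<le> p + 1 then 0 else real n - real p - 1)"

definition alpha_t :: "nat \<Rightarrow> nat \<Rightarrow> real" where
  "alpha_t p n = (if n = 1 then 1 / pi else if n \<le> p + 1 then 0 else 2 / pi)"

definition in_Sp :: "nat \<Rightarrow> (nat \<Rightarrow> complex) \<Rightarrow> (nat \<Rightarrow> complex) \<Rightarrow> bool" where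
  "in_Sp p lam al \<longleftrightarrow>
     (\<lambda>n. (norm (psqrt (lam n) - complex_of_real (real n - real p - 1)))\<^sup>2) summable_on {1..} \<and>
     (\<lambda>n. (norm (al n - complex_of_real (2 / pi)))\<^sup>2) summable_on {1..}"

definition xi :: "nat \<Rightarrow> (nat \<Rightarrow> complex) \<Rightarrow> (nat \<Rightarrow> complex) \<Rightarrow> nat \<Rightarrow> real" where
  "xi p lam al n = norm (psqrt (lam n) - complex_of_real (rho_t p n))
                 + norm (al n - complex_of_real (alpha_t p n))"

definition in_B :: "nat \<Rightarrow> real \<Rightarrow> (nat \<Rightarrow> complex) \<Rightarrow> (nat \<Rightarrow> complex) \<Rightarrow> bool" where
  "in_B p \<Omega> lam al \<longleftrightarrow> in_Sp p lam al \<and>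
     sqrt (\<Sum>\<^sub>\<infinity>n\<in>{1..}. (xi p lam al n)\<^sup>2) \<le> \<Omega>"

text \<open>lamS/rhoS/alS p lam al i n: lambda_{ni}, rho_{ni}, alpha_{ni} (i = 0: data, i = 1: model).\<close>
definition lamS :: "nat \<Rightarrow> (nat \<Rightarrow> complex) \<Rightarrow> nat \<Rightarrow> nat \<Rightarrow> complex" where
  "lamS p lam i n = (if i = 0 then lam n else complex_of_real ((rho_t p n)\<^sup>2))"

definition alS :: "nat \<Rightarrow> (nat \<Rightarrow> complex) \<Rightarrow> nat \<Rightarrow> nat \<Rightarrow> complex" where
  "alS p al i n = (if i = 0 then al n else complex_of_real (alpha_t p n))"

definition rho_hat :: "nat \<Rightarrow> (nat \<Rightarrow> complex) \<Rightarrow> nat \<Rightarrow> complex" where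
  "rho_hat p lam n = psqrt (lam n) - complex_of_real (rho_t p n)"

definition Dt :: "real \<Rightarrow> complex \<Rightarrow> complex \<Rightarrow> complex" where
  "Dt x l m = integral {0..x}
      (\<lambda>t. cos (psqrt l * complex_of_real t) * cos (psqrt m * complex_of_real t))"

definition Qt :: "nat \<Rightarrow> (nat \<Rightarrow> complex) \<Rightarrow> (nat \<Rightarrow> complex) \<Rightarrow> real
                  \<Rightarrow> nat \<Rightarrow> nat \<Rightarrow> nat \<Rightarrow> nat \<Rightarrow> complex" where
  "Qt p lam al x n i k j = alS p al j k * Dt x (lamS p lam i n) (lamS p lam j k)"

text \<open>(Q~(x) T^{-1} f)_{ni} = sum_{k>=1} [Q~_{ni,k0}(rho_hat_k f_{k0} + f_{k1}) - Q~_{ni,k1} f_{k1}].\<close>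
definition qQT :: "nat \<Rightarrow> (nat \<Rightarrow> complex) \<Rightarrow> (nat \<Rightarrow> complex) \<Rightarrow> real
                   \<Rightarrow> (nat \<Rightarrow> complex) \<Rightarrow> (nat \<Rightarrow> complex) \<Rightarrow> nat \<Rightarrow> nat \<Rightarrow> complex" where
  "qQT p lam al x f0 f1 n i =
     (\<Sum>\<^sub>\<infinity>k\<in>{1..}. Qt p lam al x n i k 0 * (rho_hat p lam k * f0 k + f1 k)
                 - Qt p lam al x n i k 1 * f1 k)"

definition in_m :: "(nat \<Rightarrow> complex) \<Rightarrow> (nat \<Rightarrow> complex) \<Rightarrow> bool" where
  "in_m f0 f1 \<longleftrightarrow> bdd_above ((\<lambda>n. norm (f0 n)) ` {1..}) \<and> bdd_above ((\<lambda>n. norm (f1 n)) ` {1..})"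

definition m_norm :: "(nat \<Rightarrow> complex) \<Rightarrow> (nat \<Rightarrow> complex) \<Rightarrow> real" where
  "m_norm f0 f1 = (SUP n\<in>{1..}. max (norm (f0 n)) (norm (f1 n)))"

end

theory Submission
  imports Defs
begin


lemma sin_int_pi: "sin (real_of_int m * pi) = 0"
proof (cases "m \<ge> 0")
  case True
  then obtain n where "m = int n" using nonneg_int_cases by blast
  then show ?thesis by simp
next
  case False
  then obtain n where "m = - int n" by (metis le_cases neg_0_le_iff_le nonneg_int_cases minus_minus)
  then show ?thesis by simp
qed

lemma int_cos_int:
  fixes m :: int
  shows "integral {0..pi} (\<lambda>t. cos (real_of_int m * t)) = (if m = 0 then pi else 0)"
proof (cases "m = 0")
  case True then show ?thesis by simp
next
  case False
  have "((\<lambda>t. cos (real_of_int m * t)) has_integral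
          (sin (real_of_int m * pi) / m - sin (real_of_int m * 0) / m)) {0..pi}"
    apply (rule fundamental_theorem_of_calculus)
     apply simp
    apply (rule has_real_derivative_iff_has_vector_derivative[THEN iffD1])
    using False by (auto intro!: derivative_eq_intros)
  then show ?thesis using False by (simp add: sin_int_pi integral_unique)
qed

lemma int_cos_int2:
  fixes m :: int
  shows "integral {0..pi} (\<lambda>t. cos (real_of_int m * t) / 2) = (if m = 0 then pi/2 else 0)"
  by (simp only: integral_divide int_cos_int) simp

lemma orth_sin:
  fixes j l :: nat assumes "j \<ge> 1" "l \<ge> 1"
  shows "integral {0..pi} (\<lambda>t. sin (real j * t) * sin (real l * t)) = (if j = l then pi/2 else 0)"
proof -
  have eq: "(\<lambda>t. sin (real j * t) * sin (real l * t)) =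
     (\<lambda>t. cos (real_of_int (int j - int l) * t) / 2 - cos (real_of_int (int j + int l) * t) / 2)"
    by (rule ext) (simp add: sin_times_sin algebra_simps diff_divide_distrib)
  have i1: "(\<lambda>t. cos (real_of_int m * t) / 2) integrable_on {0..pi}" for m :: int
    by (intro integrable_continuous_interval continuous_intros) auto
  show ?thesis
    unfolding eq
    apply (subst integral_diff[OF i1 i1])
    apply (simp only: int_cos_int2)
    using assms by auto
qed

lemma orth_cos:
  fixes j l :: nat assumes "j \<ge> 1" "l \<ge> 1"
  shows "integral {0..pi} (\<lambda>t. cos (real j * t) * cos (real l * t)) = (if j = l then pi/2 else 0)"
proof -
  have eq: "(\<lambda>t. cos (real j * t) * cos (real l * t)) =
     (\<lambda>t. cos (real_of_int (int j - int l) * t) / 2 + cos (real_of_int (int j + int l) * t) / 2)"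
    by (rule ext) (simp add: cos_times_cos algebra_simps add_divide_distrib)
  have i1: "(\<lambda>t. cos (real_of_int m * t) / 2) integrable_on {0..pi}" for m :: int
    by (intro integrable_continuous_interval continuous_intros) auto
  show ?thesis
    unfolding eq
    apply (subst integral_add[OF i1 i1])
    apply (simp only: int_cos_int2)
    using assms by auto
qed

lemma cos_bnd: "cmod (cos z) \<le> exp \<bar>Im z\<bar>"
  using cmod_cos_le_exp[of 1 z] by simp
lemma sin_bnd: "cmod (sin z) \<le> exp \<bar>Im z\<bar>"
  using cmod_sin_le_exp[of 1 z] by simp

lemma cos_m1: "cmod (cos w - 1) \<le> exp (cmod w) * (cmod w)^2"
proof -
  have "cmod (cos w - (\<Sum>k\<le>1. complex_of_real (cos_coeff k) * w ^ k)) \<le> exp \<bar>Im w\<bar> * (cmod w)^2"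
    using Taylor_cos[of w 1] by (simp add: power2_eq_square)
  moreover have "(\<Sum>k\<le>1. complex_of_real (cos_coeff k) * w ^ k) = 1"
    by (simp add: cos_coeff_def)
  moreover have "exp \<bar>Im w\<bar> \<le> exp (cmod w)" using abs_Im_le_cmod by simp
  ultimately show ?thesis
    by (smt (verit) mult_right_mono zero_le_power2)
qed

lemma sin_m1: "cmod (sin w - w) \<le> exp (cmod w) * (cmod w)^2"
proof -
  have "cmod (sin w - (\<Sum>k\<le>1. complex_of_real (sin_coeff k) * w ^ k)) \<le> exp \<bar>Im w\<bar> * (cmod w)^2"
    using Taylor_sin[of w 1] by (simp add: power2_eq_square)
  moreover have "(\<Sum>k\<le>1. complex_of_real (sin_coeff k) * w ^ k) = w"
    by (simp add: sin_coeff_def)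
  moreover have "exp \<bar>Im w\<bar> \<le> exp (cmod w)" using abs_Im_le_cmod by simp
  ultimately show ?thesis
    by (smt (verit) mult_right_mono zero_le_power2)
qed

lemma pert2:
  fixes a :: real and w :: complex
  shows "cmod (cos (of_real a + w) - cos (of_real a) + w * sin (of_real a)) \<le> 2 * exp (cmod w) * (cmod w)^2"
proof -
  have eq: "cos (of_real a + w) - cos (of_real a) + w * sin (of_real a) =
     cos (of_real a) * (cos w - 1) - sin (of_real a) * (sin w - w)"
    by (simp add: cos_add algebra_simps)
  have c1: "cmod (cos (complex_of_real a)) \<le> 1"
    by (simp only: cos_of_real norm_of_real abs_cos_le_one)
  have s1: "cmod (sin (complex_of_real a)) \<le> 1"
    by (simp only: sin_of_real norm_of_real abs_sin_le_one)
  have "cmod (cos (of_real a) * (cos w - 1) - sin (of_real a) * (sin w - w))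
     \<le> cmod (cos (of_real a)) * cmod (cos w - 1) + cmod (sin (of_real a)) * cmod (sin w - w)"
    by (metis norm_mult norm_triangle_ineq4)
  also have "\<dots> \<le> 1 * (exp (cmod w) * (cmod w)^2) + 1 * (exp (cmod w) * (cmod w)^2)"
    by (intro add_mono mult_mono c1 s1 cos_m1 sin_m1) auto
  finally show ?thesis unfolding eq by simp
qed




lemma ci: fixes f :: "real \<Rightarrow> 'a::banach"
  shows "continuous_on {0..pi} f \<Longrightarrow> x \<in> {0..pi} \<Longrightarrow> f integrable_on {0..x}"
  apply (rule integrable_continuous_interval)
  apply (erule continuous_on_subset)
  by auto

lemma int_Re: "g integrable_on S \<Longrightarrow> integral S (\<lambda>t. Re (g t)) = Re (integral S g)"
  by (rule integral_unique, rule has_integral_Re, rule integrable_integral)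

lemma int_ofreal: "(g::real\<Rightarrow>real) integrable_on S \<Longrightarrow> integral S (\<lambda>t. complex_of_real (g t)) = of_real (integral S g)"
  by (rule integral_unique, rule has_integral_of_real, rule integrable_integral)

lemma cmod_diff_sq: "(cmod (a - b))\<^sup>2 = (cmod a)\<^sup>2 - 2 * Re (a * cnj b) + (cmod b)\<^sup>2"
  unfolding cmod_power2 by (simp add: power2_eq_square algebra_simps)

lemma Re_cnj_sq: "Re (a * cnj a) = (cmod a)\<^sup>2"
  unfolding cmod_power2 by (simp add: power2_eq_square)

lemma cmod_sum_sq:
  fixes c :: "nat \<Rightarrow> complex" and g :: "nat \<Rightarrow> real"
  shows "(cmod (\<Sum>k\<in>K. c k * of_real (g k)))\<^sup>2 = (\<Sum>k\<in>K. \<Sum>l\<in>K. Re (c k * cnj (c l)) * (g k * g l))"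
proof -
  have "complex_of_real ((cmod (\<Sum>k\<in>K. c k * of_real (g k)))\<^sup>2) =
      (\<Sum>k\<in>K. c k * of_real (g k)) * cnj (\<Sum>k\<in>K. c k * of_real (g k))"
    by (rule complex_norm_square)
  also have "\<dots> = (\<Sum>k\<in>K. \<Sum>l\<in>K. (c k * of_real (g k)) * cnj (c l * of_real (g l)))"
    by (simp add: cnj_sum sum_product)
  finally have "(cmod (\<Sum>k\<in>K. c k * of_real (g k)))\<^sup>2 = Re (\<Sum>k\<in>K. \<Sum>l\<in>K. (c k * of_real (g k)) * cnj (c l * of_real (g l)))"
    by (metis Re_complex_of_real)
  also have "\<dots> = (\<Sum>k\<in>K. \<Sum>l\<in>K. Re (c k * cnj (c l)) * (g k * g l))"
    by (simp add: Re_sum algebra_simps)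
  finally show ?thesis .
qed

lemma parseval:
  fixes \<phi> :: "nat \<Rightarrow> real \<Rightarrow> real" and \<nu> :: "nat \<Rightarrow> nat" and c :: "nat \<Rightarrow> complex"
  assumes orth: "\<And>j l. j \<in> \<nu>`K \<Longrightarrow> l \<in> \<nu>`K \<Longrightarrow>
        integral {0..pi} (\<lambda>t. \<phi> j t * \<phi> l t) = (if j = l then pi/2 else 0)"
    and cont: "\<And>j. continuous_on {0..pi} (\<phi> j)"
    and fin: "finite K" and inj: "inj_on \<nu> K"
  shows "integral {0..pi} (\<lambda>t. (cmod (\<Sum>k\<in>K. c k * of_real (\<phi> (\<nu> k) t)))\<^sup>2)
         = pi/2 * (\<Sum>k\<in>K. (cmod (c k))\<^sup>2)"
proof -
  have "integral {0..pi} (\<lambda>t. (cmod (\<Sum>k\<in>K. c k * of_real (\<phi> (\<nu> k) t)))\<^sup>2)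
      = integral {0..pi} (\<lambda>t. \<Sum>k\<in>K. \<Sum>l\<in>K. Re (c k * cnj (c l)) * (\<phi> (\<nu> k) t * \<phi> (\<nu> l) t))"
    by (simp only: cmod_sum_sq)
  also have "\<dots> = (\<Sum>k\<in>K. \<Sum>l\<in>K. Re (c k * cnj (c l)) * integral {0..pi} (\<lambda>t. \<phi> (\<nu> k) t * \<phi> (\<nu> l) t))"
    apply (subst integral_sum[OF fin])
     apply (intro integrable_sum fin integrable_continuous_interval continuous_intros cont)
    apply (rule sum.cong[OF refl])
    apply (subst integral_sum[OF fin])
     apply (intro integrable_continuous_interval continuous_intros cont)
    apply (simp add: integral_mult)
    done
  also have "\<dots> = (\<Sum>k\<in>K. \<Sum>l\<in>K. if k = l then Re (c k * cnj (c l)) * (pi/2) else 0)"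
    apply (rule sum.cong[OF refl])+
    using inj by (auto simp: orth inj_on_eq_iff)
  also have "\<dots> = (\<Sum>k\<in>K. Re (c k * cnj (c k)) * (pi/2))"
    using fin by simp
  also have "\<dots> = pi/2 * (\<Sum>k\<in>K. (cmod (c k))\<^sup>2)"
    unfolding Re_cnj_sq by (simp add: sum_distrib_left mult.commute)
  finally show ?thesis .
qed

lemma bessel:
  fixes \<phi> :: "nat \<Rightarrow> real \<Rightarrow> real" and \<nu> :: "nat \<Rightarrow> nat" and h :: "real \<Rightarrow> complex"
  assumes orth: "\<And>j l. j \<in> \<nu>`K \<Longrightarrow> l \<in> \<nu>`K \<Longrightarrow>
        integral {0..pi} (\<lambda>t. \<phi> j t * \<phi> l t) = (if j = l then pi/2 else 0)"
    and cont: "\<And>j. continuous_on {0..pi} (\<phi> j)"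
    and fin: "finite K" and inj: "inj_on \<nu> K"
    and hc: "continuous_on {0..pi} h" and x: "x \<in> {0..pi}"
  shows "(\<Sum>k\<in>K. (cmod (integral {0..x} (\<lambda>t. h t * of_real (\<phi> (\<nu> k) t))))\<^sup>2)
         \<le> pi/2 * integral {0..x} (\<lambda>t. (cmod (h t))\<^sup>2)"
proof -
  define \<beta> where "\<beta> k = integral {0..x} (\<lambda>t. h t * of_real (\<phi> (\<nu> k) t))" for k
  define S where "S = (\<Sum>k\<in>K. (cmod (\<beta> k))\<^sup>2)"
  define s where "s t = (\<Sum>k\<in>K. (2/pi * \<beta> k) * of_real (\<phi> (\<nu> k) t))" for t
  have x0: "0 \<le> x" and xpi: "x \<le> pi" using x by auto
  have sc: "continuous_on {0..pi} s"
    unfolding s_def by (intro continuous_intros cont)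
  have i_hs: "(\<lambda>t. (cmod (h t - s t))\<^sup>2) integrable_on {0..x}"
    by (rule ci[OF _ x]) (intro continuous_intros hc sc)
  have i_h: "(\<lambda>t. (cmod (h t))\<^sup>2) integrable_on {0..x}"
    by (rule ci[OF _ x]) (intro continuous_intros hc)
  have i_s: "(\<lambda>t. (cmod (s t))\<^sup>2) integrable_on {0..pi}"
    by (intro integrable_continuous_interval continuous_intros sc)
  have i_s': "(\<lambda>t. (cmod (s t))\<^sup>2) integrable_on {0..x}"
    by (rule ci[OF _ x]) (intro continuous_intros sc)
  have i_hk: "(\<lambda>t. h t * of_real (\<phi> (\<nu> k) t)) integrable_on {0..x}" for k
    by (rule ci[OF _ x]) (intro continuous_intros hc cont)
  have i_re: "(\<lambda>t. Re (h t * cnj (s t))) integrable_on {0..x}"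
    by (rule ci[OF _ x]) (intro continuous_intros hc sc)
  have re_eq: "Re (h t * cnj (s t)) = (\<Sum>k\<in>K. 2/pi * Re (cnj (\<beta> k) * (h t * of_real (\<phi> (\<nu> k) t))))" for t
    unfolding s_def by (simp add: cnj_sum sum_distrib_left Re_sum algebra_simps add_divide_distrib)
  have "integral {0..x} (\<lambda>t. Re (h t * cnj (s t)))
      = (\<Sum>k\<in>K. 2/pi * integral {0..x} (\<lambda>t. Re (cnj (\<beta> k) * (h t * of_real (\<phi> (\<nu> k) t)))))"
    unfolding re_eq
    apply (subst integral_sum[OF fin])
     apply (intro integrable_on_mult_right ci[OF _ x] continuous_intros hc cont)
    apply (simp only: integral_mult_right)
    done
  also have "\<dots> = (\<Sum>k\<in>K. 2/pi * (cmod (\<beta> k))\<^sup>2)"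
    apply (rule sum.cong[OF refl])
    apply (subst int_Re)
     apply (intro integrable_on_mult_right i_hk)
    apply (simp only: integral_mult_right \<beta>_def[symmetric])
    by (metis Re_cnj_sq complex_cnj_cnj mult.commute)
  finally have I2: "integral {0..x} (\<lambda>t. Re (h t * cnj (s t))) = 2/pi * S"
    unfolding S_def by (simp add: sum_distrib_left)
  have I3: "integral {0..pi} (\<lambda>t. (cmod (s t))\<^sup>2) = 2/pi * S"
  proof -
    have P: "integral {0..pi} (\<lambda>t. (cmod (s t))\<^sup>2) = pi/2 * (\<Sum>k\<in>K. (cmod (2/pi * \<beta> k))\<^sup>2)"
      unfolding s_def by (rule parseval[OF orth cont fin inj])
    have nb: "cmod (2/pi * \<beta> k) = 2/pi * cmod (\<beta> k)" for k
      by (simp add: norm_mult norm_divide)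
    have "pi/2 * (\<Sum>k\<in>K. (cmod (2/pi * \<beta> k))\<^sup>2) = pi/2 * (\<Sum>k\<in>K. (2/pi)\<^sup>2 * (cmod (\<beta> k))\<^sup>2)"
      by (simp only: nb power_mult_distrib)
    also have "\<dots> = pi/2 * (2/pi)\<^sup>2 * S"
      unfolding S_def by (simp only: sum_distrib_left[symmetric] mult.assoc)
    also have "\<dots> = 2/pi * S"
      by (simp add: power2_eq_square)
    finally show ?thesis using P by simp
  qed
  have I4: "integral {0..x} (\<lambda>t. (cmod (s t))\<^sup>2) \<le> integral {0..pi} (\<lambda>t. (cmod (s t))\<^sup>2)"
  proof -
    have "integral {0..x} (\<lambda>t. (cmod (s t))\<^sup>2) + integral {x..pi} (\<lambda>t. (cmod (s t))\<^sup>2)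
        = integral {0..pi} (\<lambda>t. (cmod (s t))\<^sup>2)"
      by (rule Henstock_Kurzweil_Integration.integral_combine[OF x0 xpi i_s])
    moreover have "0 \<le> integral {x..pi} (\<lambda>t. (cmod (s t))\<^sup>2)"
      by (rule integral_nonneg) (use x0 in \<open>auto intro!: integrable_on_subinterval[OF i_s]\<close>)
    ultimately show ?thesis by linarith
  qed
  have "0 \<le> integral {0..x} (\<lambda>t. (cmod (h t - s t))\<^sup>2)"
    by (rule integral_nonneg[OF i_hs]) simp
  also have "\<dots> = integral {0..x} (\<lambda>t. (cmod (h t))\<^sup>2) - 2 * integral {0..x} (\<lambda>t. Re (h t * cnj (s t)))
      + integral {0..x} (\<lambda>t. (cmod (s t))\<^sup>2)"
  proof -
    have i2: "(\<lambda>t. 2 * Re (h t * cnj (s t))) integrable_on {0..x}"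
      by (rule integrable_on_mult_right[OF i_re])
    have e1: "integral {0..x} (\<lambda>t. (cmod (h t))\<^sup>2 - 2 * Re (h t * cnj (s t)) + (cmod (s t))\<^sup>2)
       = integral {0..x} (\<lambda>t. (cmod (h t))\<^sup>2 - 2 * Re (h t * cnj (s t))) + integral {0..x} (\<lambda>t. (cmod (s t))\<^sup>2)"
      by (rule integral_add[OF integrable_diff[OF i_h i2] i_s'])
    have e2: "integral {0..x} (\<lambda>t. (cmod (h t))\<^sup>2 - 2 * Re (h t * cnj (s t)))
       = integral {0..x} (\<lambda>t. (cmod (h t))\<^sup>2) - integral {0..x} (\<lambda>t. 2 * Re (h t * cnj (s t)))"
      by (rule integral_diff[OF i_h i2])
    have e3: "integral {0..x} (\<lambda>t. 2 * Re (h t * cnj (s t))) = 2 * integral {0..x} (\<lambda>t. Re (h t * cnj (s t)))"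
      by (rule integral_mult_right)
    show ?thesis unfolding cmod_diff_sq e1 e2 e3 ..
  qed
  finally have "0 \<le> integral {0..x} (\<lambda>t. (cmod (h t))\<^sup>2) - 2 * (2/pi * S) + 2/pi * S"
    using I2 I3 I4 by linarith
  then have "2/pi * S \<le> integral {0..x} (\<lambda>t. (cmod (h t))\<^sup>2)" by linarith
  then have "S \<le> pi/2 * integral {0..x} (\<lambda>t. (cmod (h t))\<^sup>2)"
    by (simp add: field_simps)
  then show ?thesis unfolding S_def \<beta>_def .
qed




lemma rt_eq: "rho_t p k = real (k - (p+1))"
  unfolding rho_t_def by (auto simp: of_nat_diff)

lemma rt_nonneg: "rho_t p k \<ge> 0"
  unfolding rt_eq by simp

lemma sq_sum4: "(cmod (a+b+c+d))\<^sup>2 \<le> 4*((cmod a)\<^sup>2+(cmod b)\<^sup>2+(cmod c)\<^sup>2+(cmod d)\<^sup>2)"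
proof -
  have "cmod (a+b+c+d) \<le> cmod a + cmod b + cmod c + cmod d"
    by (smt (verit) norm_triangle_ineq)
  then have "(cmod (a+b+c+d))\<^sup>2 \<le> (cmod a + cmod b + cmod c + cmod d)\<^sup>2"
    by (intro power_mono) auto
  also have "\<dots> \<le> 4*((cmod a)\<^sup>2+(cmod b)\<^sup>2+(cmod c)\<^sup>2+(cmod d)\<^sup>2)"
  proof -
    have "0 \<le> (cmod a - cmod b)\<^sup>2 + (cmod a - cmod c)\<^sup>2 + (cmod a - cmod d)\<^sup>2 + (cmod b - cmod c)\<^sup>2
      + (cmod b - cmod d)\<^sup>2 + (cmod c - cmod d)\<^sup>2" by simp
    then show ?thesis by (simp add: power2_eq_square algebra_simps)
  qed
  finally show ?thesis .
qed

lemma sub_int: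
  fixes f :: "real \<Rightarrow> real"
  assumes "continuous_on {0..pi} f" "\<And>t. t \<in> {0..pi} \<Longrightarrow> 0 \<le> f t" "x \<in> {0..pi}"
  shows "integral {0..x} f \<le> integral {0..pi} f"
proof -
  have i: "f integrable_on {0..pi}" by (rule integrable_continuous_interval[OF assms(1)])
  have "integral {0..x} f + integral {x..pi} f = integral {0..pi} f"
    using assms(3) by (intro Henstock_Kurzweil_Integration.integral_combine i) auto
  moreover have "0 \<le> integral {x..pi} f"
    using assms(3) by (intro integral_nonneg integrable_on_subinterval[OF i]) (auto intro: assms(2))
  ultimately show ?thesis by linarith
qed

lemma int_const_le:
  fixes f :: "real \<Rightarrow> real"
  assumes "continuous_on {0..pi} f" "\<And>t. t \<in> {0..pi} \<Longrightarrow> f t \<le> C" "x \<in> {0..pi}" "0 \<le> C"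
  shows "integral {0..x} f \<le> pi * C"
proof -
  have "integral {0..x} f \<le> integral {0..x} (\<lambda>t. C)"
    using assms by (intro integral_le ci) auto
  also have "\<dots> = x * C" using assms(3) by simp
  also have "\<dots> \<le> pi * C" using assms(3,4) by (intro mult_right_mono) auto
  finally show ?thesis .
qed

locale L =
  fixes p :: nat and \<Omega> :: real and x :: real and \<rho> :: "nat \<Rightarrow> complex" and \<xi> :: "nat \<Rightarrow> real"
  assumes \<Omega>pos: "\<Omega> > 0" and xin: "x \<in> {0..pi}"
    and eb: "\<And>k. 1 \<le> k \<Longrightarrow> cmod (\<rho> k - of_real (rho_t p k)) \<le> \<xi> k"
    and xs: "\<And>K. finite K \<Longrightarrow> K \<subseteq> {1..} \<Longrightarrow> (\<Sum>k\<in>K. (\<xi> k)\<^sup>2) \<le> \<Omega>\<^sup>2"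
begin

definition "r k = rho_t p k"
definition "e k = \<rho> k - of_real (r k)"
definition "E = exp (\<Omega> * pi)"
definition "K2 = 2 * E * pi\<^sup>2"
definition "sk k t = cos (\<rho> k * of_real t) - of_real (cos (r k * t)) + e k * of_real (t * sin (r k * t))"

lemma xi_nonneg: "1 \<le> k \<Longrightarrow> 0 \<le> \<xi> k"
  using eb[of k] norm_ge_zero order_trans by blast

lemma xi_le: assumes "1 \<le> k" shows "\<xi> k \<le> \<Omega>"
proof -
  have "(\<xi> k)\<^sup>2 \<le> \<Omega>\<^sup>2" using xs[of "{k}"] assms by simp
  then show ?thesis using \<Omega>pos xi_nonneg[OF assms] by (simp add: power2_le_iff_abs_le)
qed

lemma e_le_xi: "1 \<le> k \<Longrightarrow> cmod (e k) \<le> \<xi> k"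
  using eb unfolding e_def r_def by blast

lemma e_le: "1 \<le> k \<Longrightarrow> cmod (e k) \<le> \<Omega>"
  using e_le_xi xi_le order_trans by blast

lemma sum_xi: "finite K \<Longrightarrow> K \<subseteq> {1..} \<Longrightarrow> (\<Sum>k\<in>K. (\<xi> k)\<^sup>2) \<le> \<Omega>\<^sup>2"
  by (rule xs)

lemma sum_e: assumes "finite K" "K \<subseteq> {1..}" shows "(\<Sum>k\<in>K. (cmod (e k))\<^sup>2) \<le> \<Omega>\<^sup>2"
proof -
  have "(\<Sum>k\<in>K. (cmod (e k))\<^sup>2) \<le> (\<Sum>k\<in>K. (\<xi> k)\<^sup>2)"
    using assms by (intro sum_mono power_mono e_le_xi) auto
  then show ?thesis using xs[OF assms] by linarith
qed

lemma E_pos: "E > 0" unfolding E_def by simp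

lemma K2_nonneg: "K2 \<ge> 0" unfolding K2_def using E_pos by simp

lemma sk_bound: assumes "1 \<le> k" "t \<in> {0..pi}" shows "cmod (sk k t) \<le> K2 * (cmod (e k))\<^sup>2"
proof -
  define a where "a = r k * t"
  define w where "w = e k * of_real t"
  have t0: "0 \<le> t" "t \<le> pi" using assms(2) by auto
  have eq: "sk k t = cos (of_real a + w) - cos (of_real a) + w * sin (of_real a)"
  proof -
    have h1: "\<rho> k * of_real t = of_real a + w" unfolding a_def w_def e_def by (simp add: algebra_simps)
    have h2: "complex_of_real (cos (r k * t)) = cos (of_real a)" unfolding a_def by (simp only: cos_of_real)
    have h3: "e k * of_real (t * sin (r k * t)) = w * sin (of_real a)"
      unfolding w_def a_def by (metis of_real_mult sin_of_real mult.assoc)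
    show ?thesis unfolding sk_def h1 h2 h3 ..
  qed
  have nw: "cmod w = cmod (e k) * t" unfolding w_def using t0 by (simp add: norm_mult)
  have nw2: "cmod w \<le> \<Omega> * pi"
    unfolding nw using e_le[OF assms(1)] t0 \<Omega>pos by (intro mult_mono) auto
  have "cmod (sk k t) \<le> 2 * exp (cmod w) * (cmod w)\<^sup>2" unfolding eq by (rule pert2)
  also have "\<dots> \<le> 2 * E * ((cmod (e k))\<^sup>2 * pi\<^sup>2)"
    unfolding E_def nw using nw2 t0
    by (intro mult_mono power_mono) (auto simp: power_mult_distrib nw intro!: mult_left_mono power_mono)
  finally show ?thesis unfolding K2_def by (simp add: algebra_simps)
qed

lemma cos_rho_bound: assumes "1 \<le> k" "t \<in> {0..pi}" shows "cmod (cos (\<rho> k * of_real t)) \<le> E"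
proof -
  have t0: "0 \<le> t" "t \<le> pi" using assms(2) by auto
  have "Im (\<rho> k) = Im (e k)" unfolding e_def by simp
  then have "\<bar>Im (\<rho> k * of_real t)\<bar> = \<bar>Im (e k)\<bar> * t" using t0 by (simp add: abs_mult)
  also have "\<dots> \<le> \<Omega> * pi"
    using e_le[OF assms(1)] abs_Im_le_cmod[of "e k"] t0 by (intro mult_mono) auto
  finally show ?thesis using cos_bnd[of "\<rho> k * of_real t"] unfolding E_def
    by (meson exp_le_cancel_iff order_trans)
qed

lemma r_nu: "r k = real (k - (p+1))" unfolding r_def by (rule rt_eq)

lemma amgm: fixes a b \<mu> :: real assumes "\<mu> > 0" shows "a * b \<le> \<mu>/2 * a\<^sup>2 + b\<^sup>2 / (2*\<mu>)"
proof -
  have "0 \<le> (\<mu> * a - b)\<^sup>2" by simp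
  then have "2 * \<mu> * (a * b) \<le> \<mu> * \<mu> * a\<^sup>2 + b\<^sup>2" by (simp add: power2_eq_square algebra_simps)
  then show ?thesis using assms by (simp add: field_simps power2_eq_square)
qed

lemma split_K:
  assumes "finite K"
  shows "(\<Sum>k\<in>K. f k) = (\<Sum>k\<in>{k\<in>K. p+2 \<le> k}. f k) + (\<Sum>k\<in>{k\<in>K. k \<le> p+1}. f k)"
proof -
  have eq: "{k\<in>K. p+2 \<le> k} \<union> {k\<in>K. k \<le> p+1} = K" by auto
  have "sum f ({k\<in>K. p+2 \<le> k} \<union> {k\<in>K. k \<le> p+1}) = (\<Sum>k\<in>{k\<in>K. p+2 \<le> k}. f k) + (\<Sum>k\<in>{k\<in>K. k \<le> p+1}. f k)"
    by (rule sum.union_disjoint) (use assms in auto)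
  then show ?thesis unfolding eq .
qed

lemma card_KL: assumes "K \<subseteq> {1..}" shows "card {k\<in>K. k \<le> p+1} \<le> p+1"
proof -
  have sub: "{k\<in>K. k \<le> p+1} \<subseteq> {1..p+1}" using assms by auto
  have "card {k\<in>K. k \<le> p+1} \<le> card {1..p+1}" by (rule card_mono[OF finite_atLeastAtMost sub])
  then show ?thesis by simp
qed

lemma inj_nu: "inj_on (\<lambda>k. k - (p+1)) {k\<in>K. p+2 \<le> k}"
  by (auto simp: inj_on_def)

lemma bessel_cos:
  assumes "finite K" and hc: "continuous_on {0..pi} h"
  shows "(\<Sum>k\<in>{k\<in>K. p+2 \<le> k}. (cmod (integral {0..x} (\<lambda>t. h t * of_real (cos (r k * t)))))\<^sup>2)
        \<le> pi/2 * integral {0..x} (\<lambda>t. (cmod (h t))\<^sup>2)"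
proof -
  have "(\<Sum>k\<in>{k\<in>K. p+2 \<le> k}. (cmod (integral {0..x} (\<lambda>t. h t * of_real (cos (r k * t)))))\<^sup>2)
     = (\<Sum>k\<in>{k\<in>K. p+2 \<le> k}. (cmod (integral {0..x} (\<lambda>t. h t * of_real ((\<lambda>j t. cos (real j * t)) ((\<lambda>k. k - (p+1)) k) t))))\<^sup>2)"
    by (simp add: r_nu)
  also have "\<dots> \<le> pi/2 * integral {0..x} (\<lambda>t. (cmod (h t))\<^sup>2)"
    apply (rule bessel[OF _ _ _ inj_nu hc xin])
      apply (rule orth_cos; force)
     apply (intro continuous_intros)
    using assms(1) by auto
  finally show ?thesis .
qed

lemma bessel_sin:
  assumes "finite K" and hc: "continuous_on {0..pi} h"
  shows "(\<Sum>k\<in>{k\<in>K. p+2 \<le> k}. (cmod (integral {0..x} (\<lambda>t. h t * of_real (t * sin (r k * t)))))\<^sup>2)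
        \<le> pi^3/2 * integral {0..x} (\<lambda>t. (cmod (h t))\<^sup>2)"
proof -
  have hc': "continuous_on {0..pi} (\<lambda>t. of_real t * h t)" by (intro continuous_intros hc)
  have "(\<Sum>k\<in>{k\<in>K. p+2 \<le> k}. (cmod (integral {0..x} (\<lambda>t. h t * of_real (t * sin (r k * t)))))\<^sup>2)
     = (\<Sum>k\<in>{k\<in>K. p+2 \<le> k}. (cmod (integral {0..x} (\<lambda>t. (of_real t * h t) * of_real ((\<lambda>j t. sin (real j * t)) ((\<lambda>k. k - (p+1)) k) t))))\<^sup>2)"
    by (simp add: r_nu algebra_simps)
  also have "\<dots> \<le> pi/2 * integral {0..x} (\<lambda>t. (cmod (of_real t * h t))\<^sup>2)"
    apply (rule bessel[OF _ _ _ inj_nu hc' xin])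
      apply (rule orth_sin; force)
     apply (intro continuous_intros)
    using assms(1) by auto
  also have "\<dots> \<le> pi/2 * (pi\<^sup>2 * integral {0..x} (\<lambda>t. (cmod (h t))\<^sup>2))"
  proof -
    have "integral {0..x} (\<lambda>t. (cmod (of_real t * h t))\<^sup>2) \<le> integral {0..x} (\<lambda>t. pi\<^sup>2 * (cmod (h t))\<^sup>2)"
      apply (rule integral_le)
        apply (rule ci[OF _ xin], intro continuous_intros hc)
       apply (rule ci[OF _ xin], intro continuous_intros hc)
      using xin by (auto simp: norm_mult power_mult_distrib intro!: mult_right_mono power_mono)
    then show ?thesis by simp
  qed
  finally show ?thesis by (simp add: power2_eq_square power3_eq_cube)
qed

lemma cont_sk: "continuous_on {0..pi} (sk k)"
  unfolding sk_def by (intro continuous_intros)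

lemma gen_sum:
  fixes u v :: "nat \<Rightarrow> complex" and h :: "real \<Rightarrow> complex"
  assumes fin: "finite K" and K1: "K \<subseteq> {1..}" and hc: "continuous_on {0..pi} h"
    and mu: "\<mu> > 0" and Lam: "\<Lambda> \<ge> 0"
    and uv: "\<And>k. k \<in> K \<Longrightarrow> cmod (u k) \<le> \<Lambda> \<and> cmod (u k + v k) \<le> \<Lambda> * \<xi> k"
  shows "(\<Sum>k\<in>K. cmod (integral {0..x} (\<lambda>t. h t * (u k * cos (\<rho> k * of_real t) + v k * of_real (cos (r k * t))))))
     \<le> \<Lambda> * (\<mu> * \<Omega>\<^sup>2 + ((p+1) * (integral {0..x} (\<lambda>t. cmod (h t)))\<^sup>2 + 20 * integral {0..x} (\<lambda>t. (cmod (h t))\<^sup>2)) / \<mu>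
                + K2 * integral {0..x} (\<lambda>t. cmod (h t)) * \<Omega>\<^sup>2)"
proof -
  define N1 where "N1 = integral {0..x} (\<lambda>t. cmod (h t))"
  define N2 where "N2 = integral {0..x} (\<lambda>t. (cmod (h t))\<^sup>2)"
  define \<beta> where "\<beta> k = integral {0..x} (\<lambda>t. h t * of_real (cos (r k * t)))" for k
  define \<gamma> where "\<gamma> k = integral {0..x} (\<lambda>t. h t * of_real (t * sin (r k * t)))" for k
  define \<delta> where "\<delta> k = integral {0..x} (\<lambda>t. h t * sk k t)" for k
  have x0: "0 \<le> x" "x \<le> pi" using xin by auto
  have ih: "(\<lambda>t. cmod (h t)) integrable_on {0..x}" by (rule ci[OF _ xin]) (intro continuous_intros hc)
  have N1_nn: "0 \<le> N1" unfolding N1_def by (rule integral_nonneg[OF ih]) simp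
  have N2_nn: "0 \<le> N2" unfolding N2_def by (rule integral_nonneg) (rule ci[OF _ xin], intro continuous_intros hc, simp)
  have i1: "(\<lambda>t. h t * of_real (cos (r k * t))) integrable_on {0..x}" for k
    by (rule ci[OF _ xin]) (intro continuous_intros hc)
  have i2: "(\<lambda>t. h t * of_real (t * sin (r k * t))) integrable_on {0..x}" for k
    by (rule ci[OF _ xin]) (intro continuous_intros hc)
  have i3: "(\<lambda>t. h t * sk k t) integrable_on {0..x}" for k
    by (rule ci[OF _ xin]) (intro continuous_intros hc cont_sk)
  have decomp: "integral {0..x} (\<lambda>t. h t * (u k * cos (\<rho> k * of_real t) + v k * of_real (cos (r k * t))))
      = (u k + v k) * \<beta> k - (u k * e k) * \<gamma> k + u k * \<delta> k" for k
  proof -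
    have pw: "h t * (u k * cos (\<rho> k * of_real t) + v k * of_real (cos (r k * t)))
       = (u k + v k) * (h t * of_real (cos (r k * t))) - (u k * e k) * (h t * of_real (t * sin (r k * t)))
         + u k * (h t * sk k t)" for t
      unfolding sk_def by (simp add: algebra_simps)
    have "integral {0..x} (\<lambda>t. (u k + v k) * (h t * of_real (cos (r k * t))) - (u k * e k) * (h t * of_real (t * sin (r k * t)))
         + u k * (h t * sk k t)) =
       integral {0..x} (\<lambda>t. (u k + v k) * (h t * of_real (cos (r k * t)))) - integral {0..x} (\<lambda>t. (u k * e k) * (h t * of_real (t * sin (r k * t))))
         + integral {0..x} (\<lambda>t. u k * (h t * sk k t))"
    proof -
      have j1: "(\<lambda>t. (u k + v k) * (h t * of_real (cos (r k * t)))) integrable_on {0..x}"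
        by (rule integrable_on_mult_right[OF i1])
      have j2: "(\<lambda>t. (u k * e k) * (h t * of_real (t * sin (r k * t)))) integrable_on {0..x}"
        by (rule integrable_on_mult_right[OF i2])
      have j3: "(\<lambda>t. u k * (h t * sk k t)) integrable_on {0..x}"
        by (rule integrable_on_mult_right[OF i3])
      show ?thesis
        by (rule trans[OF integral_add[OF integrable_diff[OF j1 j2] j3]]) (simp only: integral_diff[OF j1 j2])
    qed
    then show ?thesis unfolding pw \<beta>_def \<gamma>_def \<delta>_def by simp
  qed
  have bb: "cmod (\<beta> k) \<le> N1" for k
    unfolding \<beta>_def N1_def
    by (rule integral_norm_bound_integral[OF i1 ih]) (simp add: norm_mult abs_cos_le_one mult_left_le)
  have db: "cmod (\<delta> k) \<le> K2 * (cmod (e k))\<^sup>2 * N1" if "k \<in> K" for k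
  proof -
    have "cmod (\<delta> k) \<le> integral {0..x} (\<lambda>t. K2 * (cmod (e k))\<^sup>2 * cmod (h t))"
      unfolding \<delta>_def
    proof (rule integral_norm_bound_integral[OF i3])
      show "(\<lambda>t. K2 * (cmod (e k))\<^sup>2 * cmod (h t)) integrable_on {0..x}"
        by (rule ci[OF _ xin], intro continuous_intros hc)
      fix t assume t: "t \<in> {0..x}"
      then have tp: "t \<in> {0..pi}" using x0 by auto
      have k1: "1 \<le> k" using that K1 by auto
      have "cmod (h t * sk k t) = cmod (h t) * cmod (sk k t)" by (simp add: norm_mult)
      also have "\<dots> \<le> cmod (h t) * (K2 * (cmod (e k))\<^sup>2)"
        by (intro mult_left_mono sk_bound[OF k1 tp]) simp
      finally show "cmod (h t * sk k t) \<le> K2 * (cmod (e k))\<^sup>2 * cmod (h t)" by (simp add: algebra_simps)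
    qed
    then show ?thesis unfolding N1_def by simp
  qed
  have tm: "cmod (integral {0..x} (\<lambda>t. h t * (u k * cos (\<rho> k * of_real t) + v k * of_real (cos (r k * t)))))
      \<le> \<Lambda> * (\<mu>/2 * (\<xi> k)\<^sup>2 + (cmod (\<beta> k))\<^sup>2 / (2*\<mu>) + \<mu>/2 * (cmod (e k))\<^sup>2 + (cmod (\<gamma> k))\<^sup>2 / (2*\<mu>)
           + K2 * N1 * (cmod (e k))\<^sup>2)" if k: "k \<in> K" for k
  proof -
    have k1: "1 \<le> k" using k K1 by auto
    have u1: "cmod (u k) \<le> \<Lambda>" and u2: "cmod (u k + v k) \<le> \<Lambda> * \<xi> k" using uv[OF k] by auto
    have "cmod ((u k + v k) * \<beta> k - (u k * e k) * \<gamma> k + u k * \<delta> k)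
        \<le> cmod (u k + v k) * cmod (\<beta> k) + cmod (u k) * (cmod (e k) * cmod (\<gamma> k)) + cmod (u k) * cmod (\<delta> k)"
      by (smt (verit) norm_mult norm_triangle_ineq norm_triangle_ineq4 mult.assoc)
    also have "\<dots> \<le> (\<Lambda> * \<xi> k) * cmod (\<beta> k) + \<Lambda> * (cmod (e k) * cmod (\<gamma> k)) + \<Lambda> * (K2 * (cmod (e k))\<^sup>2 * N1)"
      by (intro add_mono mult_mono u1 u2 db[OF k] order_refl) (auto simp: Lam xi_nonneg[OF k1])
    also have "\<dots> = \<Lambda> * (\<xi> k * cmod (\<beta> k) + cmod (e k) * cmod (\<gamma> k) + K2 * N1 * (cmod (e k))\<^sup>2)"
      by (simp add: algebra_simps)
    also have "\<dots> \<le> \<Lambda> * (\<mu>/2 * (\<xi> k)\<^sup>2 + (cmod (\<beta> k))\<^sup>2 / (2*\<mu>) + (\<mu>/2 * (cmod (e k))\<^sup>2 + (cmod (\<gamma> k))\<^sup>2 / (2*\<mu>))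
           + K2 * N1 * (cmod (e k))\<^sup>2)"
      by (intro mult_left_mono add_mono amgm mu order_refl Lam)
    finally show ?thesis unfolding decomp by (simp add: algebra_simps)
  qed
  have sb: "(\<Sum>k\<in>K. (cmod (\<beta> k))\<^sup>2) \<le> (p+1) * N1\<^sup>2 + pi/2 * N2"
  proof -
    have "(\<Sum>k\<in>{k\<in>K. k \<le> p+1}. (cmod (\<beta> k))\<^sup>2) \<le> (\<Sum>k\<in>{k\<in>K. k \<le> p+1}. N1\<^sup>2)"
      by (intro sum_mono power_mono bb) simp
    also have "\<dots> \<le> (p+1) * N1\<^sup>2"
      using card_KL[OF K1] by (simp add: mult_right_mono)
    finally have a: "(\<Sum>k\<in>{k\<in>K. k \<le> p+1}. (cmod (\<beta> k))\<^sup>2) \<le> (p+1) * N1\<^sup>2" .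
    have b: "(\<Sum>k\<in>{k\<in>K. p+2 \<le> k}. (cmod (\<beta> k))\<^sup>2) \<le> pi/2 * N2"
      unfolding \<beta>_def N2_def by (rule bessel_cos[OF fin hc])
    show ?thesis using a b split_K[OF fin, of "\<lambda>k. (cmod (\<beta> k))\<^sup>2"] by linarith
  qed
  have sg: "(\<Sum>k\<in>K. (cmod (\<gamma> k))\<^sup>2) \<le> pi^3/2 * N2"
  proof -
    have z: "(\<Sum>k\<in>{k\<in>K. k \<le> p+1}. (cmod (\<gamma> k))\<^sup>2) = 0"
      by (rule sum.neutral) (auto simp: \<gamma>_def r_nu)
    have b: "(\<Sum>k\<in>{k\<in>K. p+2 \<le> k}. (cmod (\<gamma> k))\<^sup>2) \<le> pi^3/2 * N2"
      unfolding \<gamma>_def N2_def by (rule bessel_sin[OF fin hc])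
    show ?thesis using z b split_K[OF fin, of "\<lambda>k. (cmod (\<gamma> k))\<^sup>2"] by linarith
  qed
  have "(\<Sum>k\<in>K. cmod (integral {0..x} (\<lambda>t. h t * (u k * cos (\<rho> k * of_real t) + v k * of_real (cos (r k * t))))))
     \<le> (\<Sum>k\<in>K. \<Lambda> * (\<mu>/2 * (\<xi> k)\<^sup>2 + (cmod (\<beta> k))\<^sup>2 / (2*\<mu>) + \<mu>/2 * (cmod (e k))\<^sup>2 + (cmod (\<gamma> k))\<^sup>2 / (2*\<mu>)
           + K2 * N1 * (cmod (e k))\<^sup>2))"
    by (rule sum_mono) (rule tm)
  also have "\<dots> = \<Lambda> * (\<mu>/2 * (\<Sum>k\<in>K. (\<xi> k)\<^sup>2) + (\<Sum>k\<in>K. (cmod (\<beta> k))\<^sup>2) / (2*\<mu>)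
        + \<mu>/2 * (\<Sum>k\<in>K. (cmod (e k))\<^sup>2) + (\<Sum>k\<in>K. (cmod (\<gamma> k))\<^sup>2) / (2*\<mu>)
           + K2 * N1 * (\<Sum>k\<in>K. (cmod (e k))\<^sup>2))"
  proof -
    have a1: "(\<Sum>k\<in>K. \<mu>/2 * (\<xi> k)\<^sup>2) = \<mu>/2 * (\<Sum>k\<in>K. (\<xi> k)\<^sup>2)" by (rule sum_distrib_left[symmetric])
    have a2: "(\<Sum>k\<in>K. (cmod (\<beta> k))\<^sup>2 / (2*\<mu>)) = (\<Sum>k\<in>K. (cmod (\<beta> k))\<^sup>2) / (2*\<mu>)" by (rule sum_divide_distrib[symmetric])
    have a3: "(\<Sum>k\<in>K. \<mu>/2 * (cmod (e k))\<^sup>2) = \<mu>/2 * (\<Sum>k\<in>K. (cmod (e k))\<^sup>2)" by (rule sum_distrib_left[symmetric])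
    have a4: "(\<Sum>k\<in>K. (cmod (\<gamma> k))\<^sup>2 / (2*\<mu>)) = (\<Sum>k\<in>K. (cmod (\<gamma> k))\<^sup>2) / (2*\<mu>)" by (rule sum_divide_distrib[symmetric])
    have a5: "(\<Sum>k\<in>K. K2 * N1 * (cmod (e k))\<^sup>2) = K2 * N1 * (\<Sum>k\<in>K. (cmod (e k))\<^sup>2)" by (rule sum_distrib_left[symmetric])
    show ?thesis
      apply (subst sum_distrib_left[symmetric])
      apply (subst sum.distrib)+
      apply (simp only: a1 a2 a3 a4 a5)
      done
  qed
  also have "\<dots> \<le> \<Lambda> * (\<mu>/2 * \<Omega>\<^sup>2 + ((p+1) * N1\<^sup>2 + pi/2 * N2) / (2*\<mu>)
        + \<mu>/2 * \<Omega>\<^sup>2 + (pi^3/2 * N2) / (2*\<mu>) + K2 * N1 * \<Omega>\<^sup>2)"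
  proof -
    have m2: "0 \<le> 2*\<mu>" using mu by simp
    have t1: "\<mu>/2 * (\<Sum>k\<in>K. (\<xi> k)\<^sup>2) \<le> \<mu>/2 * \<Omega>\<^sup>2"
      by (rule mult_left_mono[OF sum_xi[OF fin K1]]) (use mu in simp)
    have t2: "(\<Sum>k\<in>K. (cmod (\<beta> k))\<^sup>2) / (2*\<mu>) \<le> ((p+1) * N1\<^sup>2 + pi/2 * N2) / (2*\<mu>)"
      by (rule divide_right_mono[OF sb m2])
    have t3: "\<mu>/2 * (\<Sum>k\<in>K. (cmod (e k))\<^sup>2) \<le> \<mu>/2 * \<Omega>\<^sup>2"
      by (rule mult_left_mono[OF sum_e[OF fin K1]]) (use mu in simp)
    have t4: "(\<Sum>k\<in>K. (cmod (\<gamma> k))\<^sup>2) / (2*\<mu>) \<le> (pi^3/2 * N2) / (2*\<mu>)"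
      by (rule divide_right_mono[OF sg m2])
    have t5: "K2 * N1 * (\<Sum>k\<in>K. (cmod (e k))\<^sup>2) \<le> K2 * N1 * \<Omega>\<^sup>2"
      by (rule mult_left_mono[OF sum_e[OF fin K1]]) (use K2_nonneg N1_nn in simp)
    show ?thesis
      by (rule mult_left_mono[OF _ Lam]) (rule add_mono[OF add_mono[OF add_mono[OF add_mono[OF t1 t2] t3] t4] t5])
  qed
  also have "\<dots> \<le> \<Lambda> * (\<mu> * \<Omega>\<^sup>2 + ((p+1) * N1\<^sup>2 + 20 * N2) / \<mu> + K2 * N1 * \<Omega>\<^sup>2)"
  proof -
    have "pi^3 \<le> 4^3" by (rule power_mono) (use pi_less_4 pi_gt3 in auto)
    then have pi3: "pi^3 \<le> 64" by simp
    have c40: "pi/2 + pi^3/2 \<le> 40" using pi3 pi_less_4 by simp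
    have "((p+1) * N1\<^sup>2 + pi/2 * N2) / (2*\<mu>) + (pi^3/2 * N2) / (2*\<mu>) \<le> ((p+1) * N1\<^sup>2 + 20 * N2) / \<mu>"
    proof -
      have "((p+1) * N1\<^sup>2 + pi/2 * N2) / (2*\<mu>) + (pi^3/2 * N2) / (2*\<mu>) = ((p+1) * N1\<^sup>2 + (pi/2 + pi^3/2) * N2) / (2*\<mu>)"
        by (subst add_divide_distrib[symmetric]) (metis add.assoc distrib_right)
      also have "\<dots> \<le> (2 * ((p+1) * N1\<^sup>2) + 40 * N2) / (2*\<mu>)"
      proof (rule divide_right_mono)
        have "(pi/2 + pi^3/2) * N2 \<le> 40 * N2" by (rule mult_right_mono[OF c40 N2_nn])
        moreover have "0 \<le> (p+1) * N1\<^sup>2" by simp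
        ultimately show "(p+1) * N1\<^sup>2 + (pi/2 + pi^3/2) * N2 \<le> 2 * ((p+1) * N1\<^sup>2) + 40 * N2" by linarith
      qed (use mu in simp)
      also have "\<dots> = ((p+1) * N1\<^sup>2 + 20 * N2) / \<mu>" using mu by (simp add: field_simps)
      finally show ?thesis .
    qed
    then have "\<mu>/2 * \<Omega>\<^sup>2 + ((p+1) * N1\<^sup>2 + pi/2 * N2) / (2*\<mu>) + \<mu>/2 * \<Omega>\<^sup>2 + (pi^3/2 * N2) / (2*\<mu>) + K2 * N1 * \<Omega>\<^sup>2
       \<le> \<mu> * \<Omega>\<^sup>2 + ((p+1) * N1\<^sup>2 + 20 * N2) / \<mu> + K2 * N1 * \<Omega>\<^sup>2" by linarith
    then show ?thesis by (rule mult_left_mono[OF _ Lam])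
  qed
  finally show ?thesis unfolding N1_def N2_def .
qed

definition "CL = 4 * (40 * \<Omega>\<^sup>2 + pi * (real p + 1)\<^sup>2 * \<Omega>\<^sup>2 + pi * K2\<^sup>2 * \<Omega>^4)"

lemma gen_L2:
  fixes u v :: "nat \<Rightarrow> complex"
  assumes fin: "finite K" and K1: "K \<subseteq> {1..}" and Lam: "\<Lambda> \<ge> 0"
    and uv: "\<And>k. k \<in> K \<Longrightarrow> cmod (u k) \<le> \<Lambda> \<and> cmod (u k + v k) \<le> \<Lambda> * \<xi> k"
  shows "integral {0..x} (\<lambda>t. (cmod (\<Sum>k\<in>K. u k * cos (\<rho> k * of_real t) + v k * of_real (cos (r k * t))))\<^sup>2)
     \<le> \<Lambda>\<^sup>2 * CL"
proof -
  define KJ where "KJ = {k\<in>K. p+2 \<le> k}"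
  define KL where "KL = {k\<in>K. k \<le> p+1}"
  define \<nu> where "\<nu> k = k - (p+1)" for k
  define P where "P t = (\<Sum>k\<in>KJ. (u k + v k) * of_real (cos (real (\<nu> k) * t)))" for t
  define Q0 where "Q0 t = (\<Sum>k\<in>KJ. (u k * e k) * of_real (sin (real (\<nu> k) * t)))" for t
  define Z1 where "Z1 = (\<Sum>k\<in>KL. u k + v k)"
  define Z2 where "Z2 t = (\<Sum>k\<in>K. u k * sk k t)" for t
  have x0: "0 \<le> x" "x \<le> pi" using xin by auto
  have finJ: "finite KJ" and finL: "finite KL" using fin unfolding KJ_def KL_def by auto
  have KJ1: "KJ \<subseteq> {1..}" and KL1: "KL \<subseteq> {1..}" using K1 unfolding KJ_def KL_def by auto
  have injJ: "inj_on \<nu> KJ" unfolding \<nu>_def KJ_def by (rule inj_nu)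
  have rJ: "r k = real (\<nu> k)" for k unfolding \<nu>_def by (rule r_nu)
  have rL: "r k = 0" if "k \<in> KL" for k using that unfolding KL_def r_nu by auto
  have decomp: "(\<Sum>k\<in>K. u k * cos (\<rho> k * of_real t) + v k * of_real (cos (r k * t)))
      = P t + (- of_real t * Q0 t) + Z1 + Z2 t" for t
  proof -
    have pw: "u k * cos (\<rho> k * of_real t) + v k * of_real (cos (r k * t))
       = (u k + v k) * of_real (cos (r k * t)) - of_real t * ((u k * e k) * of_real (sin (r k * t)))
         + u k * sk k t" for k
      unfolding sk_def by (simp add: algebra_simps)
    have s1: "(\<Sum>k\<in>K. (u k + v k) * of_real (cos (r k * t))) = P t + Z1"
    proof -
      have a: "(\<Sum>k\<in>KJ. (u k + v k) * of_real (cos (r k * t))) = P t" unfolding P_def rJ ..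
      have b: "(\<Sum>k\<in>KL. (u k + v k) * of_real (cos (r k * t))) = Z1"
        unfolding Z1_def by (rule sum.cong) (simp_all add: rL)
      show ?thesis using split_K[OF fin, of "\<lambda>k. (u k + v k) * of_real (cos (r k * t))"] a b
        unfolding KJ_def KL_def by simp
    qed
    have s2: "(\<Sum>k\<in>K. of_real t * ((u k * e k) * of_real (sin (r k * t)))) = of_real t * Q0 t"
    proof -
      have a: "(\<Sum>k\<in>KJ. of_real t * ((u k * e k) * of_real (sin (r k * t)))) = of_real t * Q0 t"
        unfolding Q0_def rJ sum_distrib_left ..
      have b: "(\<Sum>k\<in>KL. of_real t * ((u k * e k) * of_real (sin (r k * t)))) = 0"
        by (rule sum.neutral) (simp add: rL)
      show ?thesis using split_K[OF fin, of "\<lambda>k. of_real t * ((u k * e k) * of_real (sin (r k * t)))"] a b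
        unfolding KJ_def KL_def by simp
    qed
    show ?thesis
      unfolding pw sum.distrib sum_subtractf s1 s2 Z2_def by simp
  qed
  have cP: "continuous_on {0..pi} P" unfolding P_def by (intro continuous_intros)
  have cQ: "continuous_on {0..pi} Q0" unfolding Q0_def by (intro continuous_intros)
  have cZ: "continuous_on {0..pi} Z2" unfolding Z2_def by (intro continuous_intros cont_sk)
  have bP: "integral {0..x} (\<lambda>t. (cmod (P t))\<^sup>2) \<le> pi/2 * \<Lambda>\<^sup>2 * \<Omega>\<^sup>2"
  proof -
    have "integral {0..x} (\<lambda>t. (cmod (P t))\<^sup>2) \<le> integral {0..pi} (\<lambda>t. (cmod (P t))\<^sup>2)"
      by (rule sub_int[OF _ _ xin]) (intro continuous_intros cP, simp)
    also have "\<dots> = pi/2 * (\<Sum>k\<in>KJ. (cmod (u k + v k))\<^sup>2)"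
      unfolding P_def
      apply (rule parseval[where \<phi>="\<lambda>j t. cos (real j * t)", OF _ _ finJ injJ])
       apply (rule orth_cos) apply (auto simp: \<nu>_def KJ_def)[2]
      by (intro continuous_intros)
    also have "\<dots> \<le> pi/2 * (\<Sum>k\<in>KJ. \<Lambda>\<^sup>2 * (\<xi> k)\<^sup>2)"
      using uv KJ1 unfolding KJ_def
      by (intro mult_left_mono sum_mono) (auto simp: power_mult_distrib[symmetric] intro!: power_mono)
    also have "\<dots> \<le> pi/2 * (\<Lambda>\<^sup>2 * \<Omega>\<^sup>2)"
      using sum_xi[OF finJ KJ1] by (simp add: sum_distrib_left[symmetric] mult_left_mono)
    finally show ?thesis by simp
  qed
  have bQ: "integral {0..x} (\<lambda>t. (cmod (- of_real t * Q0 t))\<^sup>2) \<le> pi^3/2 * \<Lambda>\<^sup>2 * \<Omega>\<^sup>2"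
  proof -
    have "integral {0..x} (\<lambda>t. (cmod (- of_real t * Q0 t))\<^sup>2) \<le> integral {0..x} (\<lambda>t. pi\<^sup>2 * (cmod (Q0 t))\<^sup>2)"
      apply (rule integral_le)
        apply (rule ci[OF _ xin], intro continuous_intros cQ)
       apply (rule ci[OF _ xin], intro continuous_intros cQ)
      using x0 by (auto simp: norm_mult power_mult_distrib intro!: mult_right_mono power_mono)
    also have "\<dots> = pi\<^sup>2 * integral {0..x} (\<lambda>t. (cmod (Q0 t))\<^sup>2)" by simp
    also have "\<dots> \<le> pi\<^sup>2 * integral {0..pi} (\<lambda>t. (cmod (Q0 t))\<^sup>2)"
      by (intro mult_left_mono sub_int[OF _ _ xin]) (intro continuous_intros cQ, auto)
    also have "integral {0..pi} (\<lambda>t. (cmod (Q0 t))\<^sup>2) = pi/2 * (\<Sum>k\<in>KJ. (cmod (u k * e k))\<^sup>2)"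
      unfolding Q0_def
      apply (rule parseval[where \<phi>="\<lambda>j t. sin (real j * t)", OF _ _ finJ injJ])
       apply (rule orth_sin) apply (auto simp: \<nu>_def KJ_def)[2]
      by (intro continuous_intros)
    also have "(\<Sum>k\<in>KJ. (cmod (u k * e k))\<^sup>2) \<le> (\<Sum>k\<in>KJ. \<Lambda>\<^sup>2 * (cmod (e k))\<^sup>2)"
      using uv unfolding KJ_def
      by (intro sum_mono) (auto simp: norm_mult power_mult_distrib intro!: mult_right_mono power_mono)
    also have "\<dots> \<le> \<Lambda>\<^sup>2 * \<Omega>\<^sup>2"
      using sum_e[OF finJ KJ1] by (simp add: sum_distrib_left[symmetric] mult_left_mono)
    finally show ?thesis by (simp add: power2_eq_square power3_eq_cube algebra_simps mult_left_mono)
  qed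
  have bZ1: "(cmod Z1)\<^sup>2 \<le> (real p + 1)\<^sup>2 * \<Lambda>\<^sup>2 * \<Omega>\<^sup>2"
  proof -
    have "cmod Z1 \<le> (\<Sum>k\<in>KL. cmod (u k + v k))" unfolding Z1_def by (rule norm_sum)
    also have "\<dots> \<le> (\<Sum>k\<in>KL. \<Lambda> * \<Omega>)"
    proof (rule sum_mono)
      fix k assume k: "k \<in> KL"
      then have "cmod (u k + v k) \<le> \<Lambda> * \<xi> k" using uv unfolding KL_def by auto
      also have "\<dots> \<le> \<Lambda> * \<Omega>" using xi_le[of k] k KL1 Lam by (auto intro: mult_left_mono)
      finally show "cmod (u k + v k) \<le> \<Lambda> * \<Omega>" .
    qed
    also have "\<dots> \<le> (real p + 1) * (\<Lambda> * \<Omega>)"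
      using card_KL[OF K1] Lam \<Omega>pos unfolding KL_def by (simp add: mult_right_mono)
    finally have "cmod Z1 \<le> (real p + 1) * (\<Lambda> * \<Omega>)" .
    then have "(cmod Z1)\<^sup>2 \<le> ((real p + 1) * (\<Lambda> * \<Omega>))\<^sup>2" by (intro power_mono) auto
    then show ?thesis by (simp add: power_mult_distrib)
  qed
  have bZ2: "(cmod (Z2 t))\<^sup>2 \<le> \<Lambda>\<^sup>2 * K2\<^sup>2 * \<Omega>^4" if t: "t \<in> {0..pi}" for t
  proof -
    have "cmod (Z2 t) \<le> (\<Sum>k\<in>K. cmod (u k * sk k t))" unfolding Z2_def by (rule norm_sum)
    also have "\<dots> \<le> (\<Sum>k\<in>K. \<Lambda> * (K2 * (cmod (e k))\<^sup>2))"
    proof (rule sum_mono)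
      fix k assume k: "k \<in> K"
      have "cmod (u k * sk k t) = cmod (u k) * cmod (sk k t)" by (simp add: norm_mult)
      also have "\<dots> \<le> \<Lambda> * (K2 * (cmod (e k))\<^sup>2)"
        using uv[OF k] sk_bound[of k t] k K1 t Lam by (intro mult_mono) auto
      finally show "cmod (u k * sk k t) \<le> \<Lambda> * (K2 * (cmod (e k))\<^sup>2)" .
    qed
    also have "\<dots> = \<Lambda> * K2 * (\<Sum>k\<in>K. (cmod (e k))\<^sup>2)" by (simp add: sum_distrib_left algebra_simps)
    also have "\<dots> \<le> \<Lambda> * K2 * \<Omega>\<^sup>2"
      using sum_e[OF fin K1] Lam K2_nonneg by (intro mult_left_mono) auto
    finally have "cmod (Z2 t) \<le> \<Lambda> * K2 * \<Omega>\<^sup>2" .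
    then have "(cmod (Z2 t))\<^sup>2 \<le> (\<Lambda> * K2 * \<Omega>\<^sup>2)\<^sup>2" by (intro power_mono) auto
    then show ?thesis by (simp add: power_mult_distrib power2_eq_square power4_eq_xxxx algebra_simps)
  qed
  have "integral {0..x} (\<lambda>t. (cmod (\<Sum>k\<in>K. u k * cos (\<rho> k * of_real t) + v k * of_real (cos (r k * t))))\<^sup>2)
      \<le> integral {0..x} (\<lambda>t. 4 * ((cmod (P t))\<^sup>2 + (cmod (- of_real t * Q0 t))\<^sup>2 + (cmod Z1)\<^sup>2 + (cmod (Z2 t))\<^sup>2))"
    apply (rule integral_le)
      apply (rule ci[OF _ xin])
      apply (unfold decomp, intro continuous_intros cP cQ cZ)[1]
     apply (rule ci[OF _ xin], intro continuous_intros cP cQ cZ)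
    unfolding decomp by (rule sq_sum4)
  also have "\<dots> = 4 * (integral {0..x} (\<lambda>t. (cmod (P t))\<^sup>2) + integral {0..x} (\<lambda>t. (cmod (- of_real t * Q0 t))\<^sup>2)
      + integral {0..x} (\<lambda>t. (cmod Z1)\<^sup>2) + integral {0..x} (\<lambda>t. (cmod (Z2 t))\<^sup>2))"
  proof -
    have j1: "(\<lambda>t. (cmod (P t))\<^sup>2) integrable_on {0..x}" by (rule ci[OF _ xin], intro continuous_intros cP)
    have j2: "(\<lambda>t. (cmod (- of_real t * Q0 t))\<^sup>2) integrable_on {0..x}" by (rule ci[OF _ xin], intro continuous_intros cQ)
    have j3: "(\<lambda>t. (cmod Z1)\<^sup>2) integrable_on {0..x}" by (rule ci[OF _ xin], intro continuous_intros)
    have j4: "(\<lambda>t. (cmod (Z2 t))\<^sup>2) integrable_on {0..x}" by (rule ci[OF _ xin], intro continuous_intros cZ)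
    show ?thesis
      apply (subst integral_mult_right)
      apply (subst integral_add[OF integrable_add[OF integrable_add[OF j1 j2] j3] j4])
      apply (subst integral_add[OF integrable_add[OF j1 j2] j3])
      apply (subst integral_add[OF j1 j2])
      ..
  qed
  also have "\<dots> \<le> 4 * (pi/2 * \<Lambda>\<^sup>2 * \<Omega>\<^sup>2 + pi^3/2 * \<Lambda>\<^sup>2 * \<Omega>\<^sup>2
      + pi * ((real p + 1)\<^sup>2 * \<Lambda>\<^sup>2 * \<Omega>\<^sup>2) + pi * (\<Lambda>\<^sup>2 * K2\<^sup>2 * \<Omega>^4))"
  proof -
    have c1: "integral {0..x} (\<lambda>t. (cmod Z1)\<^sup>2) \<le> pi * ((real p + 1)\<^sup>2 * \<Lambda>\<^sup>2 * \<Omega>\<^sup>2)"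
      by (rule int_const_le[OF _ _ xin]) (auto intro: continuous_intros bZ1)
    have c2: "integral {0..x} (\<lambda>t. (cmod (Z2 t))\<^sup>2) \<le> pi * (\<Lambda>\<^sup>2 * K2\<^sup>2 * \<Omega>^4)"
      by (rule int_const_le[OF _ _ xin]) (auto intro!: continuous_intros cZ bZ2)
    show ?thesis by (rule mult_left_mono[OF add_mono[OF add_mono[OF add_mono[OF bP bQ] c1] c2]]) simp
  qed
  also have "\<dots> \<le> \<Lambda>\<^sup>2 * CL"
  proof -
    have "pi^3 \<le> 4^3" by (rule power_mono) (use pi_less_4 pi_gt3 in auto)
    then have c40: "pi/2 + pi^3/2 \<le> 40" using pi_less_4 by simp
    have L0: "0 \<le> \<Lambda>\<^sup>2 * \<Omega>\<^sup>2" by simp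
    have "pi/2 * \<Lambda>\<^sup>2 * \<Omega>\<^sup>2 + pi^3/2 * \<Lambda>\<^sup>2 * \<Omega>\<^sup>2 = (pi/2 + pi^3/2) * (\<Lambda>\<^sup>2 * \<Omega>\<^sup>2)"
      by (simp add: algebra_simps)
    also have "\<dots> \<le> 40 * (\<Lambda>\<^sup>2 * \<Omega>\<^sup>2)" by (rule mult_right_mono[OF c40 L0])
    finally have "pi/2 * \<Lambda>\<^sup>2 * \<Omega>\<^sup>2 + pi^3/2 * \<Lambda>\<^sup>2 * \<Omega>\<^sup>2 \<le> 40 * (\<Lambda>\<^sup>2 * \<Omega>\<^sup>2)" .
    then show ?thesis unfolding CL_def by (simp add: algebra_simps)
  qed
  finally show ?thesis .
qed

end



lemma psqrt_real: "r \<ge> 0 \<Longrightarrow> psqrt (complex_of_real (r\<^sup>2)) = complex_of_real r"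
  unfolding psqrt_def by (simp add: csqrt_of_real)

lemma xs_lemma:
  assumes B: "in_B p \<Omega> lam al" and \<Omega>: "\<Omega> > 0" and fin: "finite K" and K1: "K \<subseteq> {1..}"
  shows "(\<Sum>k\<in>K. (xi p lam al k)\<^sup>2) \<le> \<Omega>\<^sup>2"
proof -
  let ?A = "\<lambda>n. (norm (psqrt (lam n) - complex_of_real (real n - real p - 1)))\<^sup>2"
  let ?B = "\<lambda>n. (norm (al n - complex_of_real (2 / pi)))\<^sup>2"
  have sA: "?A summable_on {1..}" and sB: "?B summable_on {1..}"
    using B unfolding in_B_def in_Sp_def by auto
  have sAB: "(\<lambda>n. 2 * ?A n + 2 * ?B n) summable_on {p+2..}"
    by (intro summable_on_add summable_on_cmult_right summable_on_subset[OF sA] summable_on_subset[OF sB]) auto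
  have s2: "(\<lambda>n. (xi p lam al n)\<^sup>2) summable_on {p+2..}"
  proof (rule summable_on_comparison_test[OF sAB])
    fix n assume n: "n \<in> {p+2..}"
    then have rt: "rho_t p n = real n - real p - 1" and at: "alpha_t p n = 2/pi"
      unfolding rho_t_def alpha_t_def by auto
    have "(xi p lam al n)\<^sup>2 = (sqrt (?A n) + sqrt (?B n))\<^sup>2"
      unfolding xi_def rt at by simp
    also have "\<dots> \<le> 2 * ?A n + 2 * ?B n"
    proof -
      have "0 \<le> (sqrt (?A n) - sqrt (?B n))\<^sup>2" by simp
      then show ?thesis by (simp add: power2_eq_square algebra_simps)
    qed
    finally show "(xi p lam al n)\<^sup>2 \<le> 2 * ?A n + 2 * ?B n" .
  qed simp
  have s1: "(\<lambda>n. (xi p lam al n)\<^sup>2) summable_on {1..p+1}" by simp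
  have un: "{1..p+1} \<union> {p+2..} = {1::nat..}" by auto
  have s: "(\<lambda>n. (xi p lam al n)\<^sup>2) summable_on {1..}"
    using summable_on_union[OF s1 s2] unfolding un .
  have "(\<Sum>k\<in>K. (xi p lam al k)\<^sup>2) \<le> (\<Sum>\<^sub>\<infinity>n\<in>{1..}. (xi p lam al n)\<^sup>2)"
    by (rule finite_sum_le_infsum[OF s fin K1]) simp
  also have "\<dots> \<le> \<Omega>\<^sup>2"
  proof -
    have nn: "0 \<le> (\<Sum>\<^sub>\<infinity>n\<in>{1..}. (xi p lam al n)\<^sup>2)" by (rule infsum_nonneg) simp
    have "sqrt (\<Sum>\<^sub>\<infinity>n\<in>{1..}. (xi p lam al n)\<^sup>2) \<le> \<Omega>" using B unfolding in_B_def by auto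
    then have "(sqrt (\<Sum>\<^sub>\<infinity>n\<in>{1..}. (xi p lam al n)\<^sup>2))\<^sup>2 \<le> \<Omega>\<^sup>2"
      using nn by (intro power_mono) auto
    then show ?thesis using nn by simp
  qed
  finally show ?thesis .
qed

definition "K2g \<Omega> = 2 * exp (\<Omega> * pi) * pi\<^sup>2"
definition "CLg p \<Omega> = 4 * (40 * \<Omega>\<^sup>2 + pi * (real p + 1)\<^sup>2 * \<Omega>\<^sup>2 + pi * (K2g \<Omega>)\<^sup>2 * \<Omega>^4)"
definition "A1g p \<Omega> = (pi + (2+\<Omega>)^4 * CLg p \<Omega>) / 2"
definition "Cg p \<Omega> = \<Omega>\<^sup>2 + (real p + 1) * (A1g p \<Omega>)\<^sup>2 + 20 * (2+\<Omega>)^4 * CLg p \<Omega> + K2g \<Omega> * A1g p \<Omega> * \<Omega>\<^sup>2"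

lemma (in L) K2_eq: "K2 = K2g \<Omega>" unfolding K2_def E_def K2g_def ..
lemma (in L) CL_eq: "CL = CLg p \<Omega>" unfolding CL_def CLg_def K2_eq ..

lemma m_norm_bound:
  assumes "in_m f0 f1" "1 \<le> k"
  shows "cmod (f0 k) \<le> m_norm f0 f1 \<and> cmod (f1 k) \<le> m_norm f0 f1"
proof -
  obtain M0 where M0: "\<And>n. n \<in> {1..} \<Longrightarrow> cmod (f0 n) \<le> M0"
    using assms(1) unfolding in_m_def bdd_above_def by auto
  obtain M1 where M1: "\<And>n. n \<in> {1..} \<Longrightarrow> cmod (f1 n) \<le> M1"
    using assms(1) unfolding in_m_def bdd_above_def by auto
  have bdd: "bdd_above ((\<lambda>n. max (cmod (f0 n)) (cmod (f1 n))) ` {1..})"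
  proof (rule bdd_aboveI2[where M="max M0 M1"])
    fix n :: nat assume n: "n \<in> {1..}"
    show "max (cmod (f0 n)) (cmod (f1 n)) \<le> max M0 M1"
      by (rule max.mono[OF M0[OF n] M1[OF n]])
  qed
  have "max (cmod (f0 k)) (cmod (f1 k)) \<le> m_norm f0 f1"
    unfolding m_norm_def by (rule cSUP_upper[OF _ bdd]) (use assms(2) in simp)
  then show ?thesis by simp
qed

lemma psqrt_lamS1: "psqrt (lamS p lam 1 n) = complex_of_real (rho_t p n)"
  unfolding lamS_def using psqrt_real[OF rt_nonneg] by simp

lemma main_fixed:
  fixes p :: nat and \<Omega> :: real and lam al :: "nat \<Rightarrow> complex" and x :: real and f0 f1 :: "nat \<Rightarrow> complex"
  assumes \<Omega>pos: "\<Omega> > 0" and B: "in_B p \<Omega> lam al" and xin: "x \<in> {0..pi}" and fm: "in_m f0 f1"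
  shows "(\<lambda>n. norm (qQT p lam al x f0 f1 n 0 - qQT p lam al x f0 f1 n 1)) summable_on {1..} \<and>
           (\<Sum>\<^sub>\<infinity>n\<in>{1..}. norm (qQT p lam al x f0 f1 n 0 - qQT p lam al x f0 f1 n 1))
              \<le> Cg p \<Omega> * m_norm f0 f1"
proof -
  interpret L p \<Omega> x "\<lambda>k. psqrt (lam k)" "xi p lam al"
  proof
    show "0 < \<Omega>" by (rule \<Omega>pos)
    show "x \<in> {0..pi}" by (rule xin)
    show "cmod (psqrt (lam k) - complex_of_real (rho_t p k)) \<le> xi p lam al k" for k
      unfolding xi_def by simp
    show "(\<Sum>k\<in>K. (xi p lam al k)\<^sup>2) \<le> \<Omega>\<^sup>2" if "finite K" "K \<subseteq> {1..}" for K
      by (rule xs_lemma[OF B \<Omega>pos that])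
  qed
  define F where "F = m_norm f0 f1"
  define u where "u k = al k * (rho_hat p lam k * f0 k + f1 k)" for k
  define v where "v k = - of_real (alpha_t p k) * f1 k" for k
  define \<psi> where "\<psi> n i t = cos (psqrt (lamS p lam i n) * of_real t)" for n i t
  define T where "T n i k = Qt p lam al x n i k 0 * (rho_hat p lam k * f0 k + f1 k) - Qt p lam al x n i k 1 * f1 k" for n i k
  define \<Lambda>1 where "\<Lambda>1 = (2+\<Omega>)\<^sup>2 * F"
  define G where "G k t = u k * cos (psqrt (lam k) * of_real t) + v k * of_real (cos (r k * t))" for k t
  have qT: "qQT p lam al x f0 f1 n i = (\<Sum>\<^sub>\<infinity>k\<in>{1..}. T n i k)" for n i
    unfolding qQT_def T_def ..
  have fb: "cmod (f0 k) \<le> F \<and> cmod (f1 k) \<le> F" if "1 \<le> k" for k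
    unfolding F_def by (rule m_norm_bound[OF fm that])
  have F_nn: "0 \<le> F" using fb[of 1] norm_ge_zero[of "f0 1"] by linarith
  have ek: "e k = rho_hat p lam k" for k unfolding e_def r_def rho_hat_def ..
  have cG: "continuous_on {0..pi} (G k)" for k unfolding G_def by (intro continuous_intros)
  have c\<psi>: "continuous_on {0..pi} (\<psi> n i)" for n i unfolding \<psi>_def by (intro continuous_intros)
  have Trep: "T n i k = integral {0..x} (\<lambda>t. \<psi> n i t * G k t)" for n i k
  proof -
    have i1: "(\<lambda>t. \<psi> n i t * cos (psqrt (lam k) * of_real t)) integrable_on {0..x}"
      by (rule ci[OF _ xin]) (intro continuous_intros c\<psi>)
    have i2: "(\<lambda>t. \<psi> n i t * of_real (cos (r k * t))) integrable_on {0..x}"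
      by (rule ci[OF _ xin]) (intro continuous_intros c\<psi>)
    have d0: "Dt x (lamS p lam i n) (lamS p lam 0 k) = integral {0..x} (\<lambda>t. \<psi> n i t * cos (psqrt (lam k) * of_real t))"
      unfolding Dt_def \<psi>_def lamS_def by simp
    have d1: "Dt x (lamS p lam i n) (lamS p lam 1 k) = integral {0..x} (\<lambda>t. \<psi> n i t * of_real (cos (r k * t)))"
      unfolding Dt_def \<psi>_def psqrt_lamS1 r_def by (simp add: cos_of_real[symmetric])
    have "T n i k = u k * integral {0..x} (\<lambda>t. \<psi> n i t * cos (psqrt (lam k) * of_real t))
        + v k * integral {0..x} (\<lambda>t. \<psi> n i t * of_real (cos (r k * t)))"
      unfolding T_def Qt_def d0 d1 u_def v_def alS_def by (simp add: algebra_simps)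
    also have "\<dots> = integral {0..x} (\<lambda>t. u k * (\<psi> n i t * cos (psqrt (lam k) * of_real t))
        + v k * (\<psi> n i t * of_real (cos (r k * t))))"
      by (simp only: integral_add[OF integrable_on_mult_right[OF i1] integrable_on_mult_right[OF i2]] integral_mult_right)
    also have "\<dots> = integral {0..x} (\<lambda>t. \<psi> n i t * G k t)"
      unfolding G_def by (simp add: algebra_simps)
    finally show ?thesis .
  qed
  have uvb: "cmod (u k) \<le> \<Lambda>1 \<and> cmod (u k + v k) \<le> \<Lambda>1 * xi p lam al k" if k: "1 \<le> k" for k
  proof -
    have \<xi>0: "0 \<le> xi p lam al k" using xi_nonneg[OF k] .
    have \<xi>\<Omega>: "xi p lam al k \<le> \<Omega>" using xi_le[OF k] .
    have at: "0 \<le> alpha_t p k" "alpha_t p k \<le> 1"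
      unfolding alpha_t_def using pi_gt3 by (auto simp: field_simps)
    have rh: "cmod (rho_hat p lam k) \<le> xi p lam al k" using e_le_xi[OF k] unfolding ek .
    have ah: "cmod (al k - of_real (alpha_t p k)) \<le> xi p lam al k" unfolding xi_def by simp
    have al1: "cmod (al k) \<le> 1 + \<Omega>"
    proof -
      have "cmod (al k) \<le> cmod (of_real (alpha_t p k) :: complex) + cmod (al k - of_real (alpha_t p k))"
        by (metis add.commute diff_add_cancel norm_triangle_ineq)
      then show ?thesis using at ah \<xi>\<Omega> by simp
    qed
    have f0b: "cmod (f0 k) \<le> F" and f1b: "cmod (f1 k) \<le> F" using fb[OF k] by auto
    have "cmod (u k) \<le> (1 + \<Omega>) * (\<Omega> * F + F)"
    proof -
      have "cmod (rho_hat p lam k * f0 k + f1 k) \<le> cmod (rho_hat p lam k) * cmod (f0 k) + cmod (f1 k)"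
        by (metis norm_mult norm_triangle_ineq)
      also have "\<dots> \<le> \<Omega> * F + F" using rh \<xi>\<Omega> f0b f1b \<Omega>pos by (intro add_mono mult_mono) auto
      finally show ?thesis unfolding u_def norm_mult using al1 \<Omega>pos by (intro mult_mono) auto
    qed
    also have "\<dots> \<le> \<Lambda>1" unfolding \<Lambda>1_def using F_nn \<Omega>pos
      by (simp add: power2_eq_square algebra_simps mult_left_mono)
    finally have A: "cmod (u k) \<le> \<Lambda>1" .
    have "u k + v k = al k * rho_hat p lam k * f0 k + (al k - of_real (alpha_t p k)) * f1 k"
      unfolding u_def v_def by (simp add: algebra_simps)
    then have "cmod (u k + v k) \<le> cmod (al k) * cmod (rho_hat p lam k) * cmod (f0 k) + cmod (al k - of_real (alpha_t p k)) * cmod (f1 k)"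
      by (metis norm_mult norm_triangle_ineq)
    also have "\<dots> \<le> (1 + \<Omega>) * xi p lam al k * F + xi p lam al k * F"
      using al1 rh ah f0b f1b \<xi>0 \<Omega>pos by (intro add_mono mult_mono) auto
    also have "\<dots> = (2 + \<Omega>) * F * xi p lam al k" by (simp add: algebra_simps)
    also have "\<dots> \<le> \<Lambda>1 * xi p lam al k"
      unfolding \<Lambda>1_def using F_nn \<Omega>pos \<xi>0
      by (intro mult_right_mono) (auto simp: power2_eq_square intro!: mult_right_mono)
    finally show ?thesis using A by simp
  qed
  have L1_nn: "0 \<le> \<Lambda>1" unfolding \<Lambda>1_def using F_nn by simp
  have summ: "(T n i) summable_on {1..}" for n i
  proof (rule abs_summable_summable, rule nonneg_bdd_above_summable_on)
    let ?M = "\<Lambda>1 * (1 * \<Omega>\<^sup>2 + ((p+1) * (integral {0..x} (\<lambda>t. cmod (\<psi> n i t)))\<^sup>2 + 20 * integral {0..x} (\<lambda>t. (cmod (\<psi> n i t))\<^sup>2)) / 1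
                + K2 * integral {0..x} (\<lambda>t. cmod (\<psi> n i t)) * \<Omega>\<^sup>2)"
    show "bdd_above (sum (\<lambda>k. norm (T n i k)) ` {K. K \<subseteq> {1..} \<and> finite K})"
    proof (rule bdd_aboveI2[where M="?M"])
      fix K :: "nat set" assume K: "K \<in> {K. K \<subseteq> {1..} \<and> finite K}"
      have "(\<Sum>k\<in>K. norm (T n i k)) = (\<Sum>k\<in>K. cmod (integral {0..x} (\<lambda>t. \<psi> n i t * (u k * cos (psqrt (lam k) * of_real t) + v k * of_real (cos (r k * t))))))"
        unfolding Trep G_def ..
      also have "\<dots> \<le> ?M"
        using K uvb by (intro gen_sum c\<psi> L1_nn) auto
      finally show "(\<Sum>k\<in>K. norm (T n i k)) \<le> ?M" .
    qed
  qed simp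
  have \<psi>0: "\<psi> n 0 t = 1 * cos (psqrt (lam n) * of_real t)" for n t unfolding \<psi>_def lamS_def by simp
  have \<psi>1: "\<psi> n 1 t = - (-1 * of_real (cos (r n * t)))" for n t
    unfolding \<psi>_def psqrt_lamS1 r_def by (simp add: cos_of_real[symmetric])
  have perK: "(\<Sum>n\<in>N. cmod ((\<Sum>k\<in>K. T n 0 k) - (\<Sum>k\<in>K. T n 1 k))) \<le> Cg p \<Omega> * F"
    if K: "finite K" "K \<subseteq> {1..}" and N: "finite N" "N \<subseteq> {1..}" for K N
  proof (cases "F = 0")
    case True
    have "T n i k = 0" if "k \<in> K" for n i k
    proof -
      have "cmod (f0 k) \<le> 0" "cmod (f1 k) \<le> 0" using fb[of k] K that True by auto
      then show ?thesis unfolding T_def by simp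
    qed
    then show ?thesis using True by simp
  next
    case False
    then have Fpos: "F > 0" using F_nn by simp
    define H where "H t = (\<Sum>k\<in>K. G k t)" for t
    have cH: "continuous_on {0..pi} H" unfolding H_def by (intro continuous_intros cG)
    have sT: "(\<Sum>k\<in>K. T n i k) = integral {0..x} (\<lambda>t. \<psi> n i t * H t)" for n i
    proof -
      have "(\<Sum>k\<in>K. T n i k) = (\<Sum>k\<in>K. integral {0..x} (\<lambda>t. \<psi> n i t * G k t))" unfolding Trep ..
      also have "\<dots> = integral {0..x} (\<lambda>t. \<Sum>k\<in>K. \<psi> n i t * G k t)"
        by (rule integral_sum[symmetric, OF K(1)]) (rule ci[OF _ xin], intro continuous_intros c\<psi> cG)
      also have "\<dots> = integral {0..x} (\<lambda>t. \<psi> n i t * H t)" unfolding H_def sum_distrib_left ..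
      finally show ?thesis .
    qed
    have dif: "(\<Sum>k\<in>K. T n 0 k) - (\<Sum>k\<in>K. T n 1 k)
       = integral {0..x} (\<lambda>t. H t * ((\<lambda>_. 1::complex) n * cos (psqrt (lam n) * of_real t) + (\<lambda>_. -1::complex) n * of_real (cos (r n * t))))" for n
    proof -
      have j0: "(\<lambda>t. \<psi> n 0 t * H t) integrable_on {0..x}" by (rule ci[OF _ xin], intro continuous_intros c\<psi> cH)
      have j1: "(\<lambda>t. \<psi> n 1 t * H t) integrable_on {0..x}" by (rule ci[OF _ xin], intro continuous_intros c\<psi> cH)
      show ?thesis unfolding sT integral_diff[OF j0 j1, symmetric]
        by (rule arg_cong[where f="integral {0..x}"]) (rule ext, simp only: \<psi>0 \<psi>1, simp add: algebra_simps)
    qed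
    define N1 where "N1 = integral {0..x} (\<lambda>t. cmod (H t))"
    define N2 where "N2 = integral {0..x} (\<lambda>t. (cmod (H t))\<^sup>2)"
    define a where "a = A1g p \<Omega>"
    define b where "b = (2+\<Omega>)^4 * CLg p \<Omega>"
    have b_nn: "0 \<le> b" unfolding b_def CLg_def using \<Omega>pos by simp
    have a_nn: "0 \<le> a" unfolding a_def A1g_def using b_nn b_def by simp
    have N1_nn: "0 \<le> N1" unfolding N1_def by (rule integral_nonneg) (rule ci[OF _ xin], intro continuous_intros cH, simp)
    have N2_nn: "0 \<le> N2" unfolding N2_def by (rule integral_nonneg) (rule ci[OF _ xin], intro continuous_intros cH, simp)
    have N2b: "N2 \<le> b * F\<^sup>2"
    proof -
      have "N2 \<le> \<Lambda>1\<^sup>2 * CL"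
        unfolding N2_def H_def G_def
        by (rule gen_L2[OF K L1_nn]) (use K uvb in auto)
      also have "\<dots> = b * F\<^sup>2" unfolding \<Lambda>1_def b_def CL_eq by (simp add: power_mult_distrib algebra_simps)
      finally show ?thesis .
    qed
    have N1b: "N1 \<le> a * F"
    proof -
      have "N1 \<le> integral {0..x} (\<lambda>t. F/2 * 1\<^sup>2 + (cmod (H t))\<^sup>2 / (2*F))"
        unfolding N1_def
      proof (rule integral_le)
        show "(\<lambda>t. cmod (H t)) integrable_on {0..x}" by (rule ci[OF _ xin], intro continuous_intros cH)
        show "(\<lambda>t. F/2 * 1\<^sup>2 + (cmod (H t))\<^sup>2 / (2*F)) integrable_on {0..x}"
          by (rule ci[OF _ xin]) (intro continuous_intros cH, use Fpos in auto)
        fix t assume "t \<in> {0..x}"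
        show "cmod (H t) \<le> F/2 * 1\<^sup>2 + (cmod (H t))\<^sup>2 / (2*F)"
          using amgm[OF Fpos, of 1 "cmod (H t)"] by simp
      qed
      also have "\<dots> = x * (F/2) + N2 / (2*F)"
      proof -
        have j: "(\<lambda>t. (cmod (H t))\<^sup>2 / (2*F)) integrable_on {0..x}"
          by (rule ci[OF _ xin]) (intro continuous_intros cH, use Fpos in auto)
        have "integral {0..x} (\<lambda>t. F/2 * 1\<^sup>2 + (cmod (H t))\<^sup>2 / (2*F))
            = integral {0..x} (\<lambda>t. F/2 * 1\<^sup>2) + integral {0..x} (\<lambda>t. (cmod (H t))\<^sup>2 / (2*F))"
          by (rule integral_add[OF _ j]) (rule ci[OF _ xin], intro continuous_intros)
        then show ?thesis unfolding N2_def using xin by simp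
      qed
      also have "\<dots> \<le> pi * (F/2) + b * F\<^sup>2 / (2*F)"
        using xin Fpos N2b by (intro add_mono mult_right_mono divide_right_mono) auto
      also have "\<dots> = a * F" unfolding a_def A1g_def b_def using Fpos by (simp add: power2_eq_square field_simps)
      finally show ?thesis .
    qed
    have "(\<Sum>n\<in>N. cmod ((\<Sum>k\<in>K. T n 0 k) - (\<Sum>k\<in>K. T n 1 k)))
        = (\<Sum>n\<in>N. cmod (integral {0..x} (\<lambda>t. H t * ((\<lambda>_. 1::complex) n * cos (psqrt (lam n) * of_real t) + (\<lambda>_. -1::complex) n * of_real (cos (r n * t))))))"
      unfolding dif ..
    also have "\<dots> \<le> 1 * (F * \<Omega>\<^sup>2 + ((p+1) * N1\<^sup>2 + 20 * N2) / F + K2 * N1 * \<Omega>\<^sup>2)"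
      unfolding N1_def N2_def
      by (rule gen_sum[OF N cH Fpos zero_le_one]) (use N xi_nonneg in auto)
    also have "\<dots> \<le> F * \<Omega>\<^sup>2 + ((p+1) * (a * F)\<^sup>2 + 20 * (b * F\<^sup>2)) / F + K2 * (a * F) * \<Omega>\<^sup>2"
    proof -
      have "N1\<^sup>2 \<le> (a * F)\<^sup>2" using N1b N1_nn by (intro power_mono) auto
      then have "((p+1) * N1\<^sup>2 + 20 * N2) / F \<le> ((p+1) * (a * F)\<^sup>2 + 20 * (b * F\<^sup>2)) / F"
        using N2b Fpos by (intro divide_right_mono add_mono mult_left_mono) auto
      moreover have "K2 * N1 * \<Omega>\<^sup>2 \<le> K2 * (a * F) * \<Omega>\<^sup>2"
        using N1b K2_nonneg by (intro mult_right_mono mult_left_mono) auto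
      ultimately show ?thesis by simp
    qed
    also have "\<dots> = Cg p \<Omega> * F"
      unfolding Cg_def a_def[symmetric] b_def K2_eq using Fpos by (simp add: power2_eq_square field_simps)
    finally show ?thesis .
  qed
  define q where "q n = cmod (qQT p lam al x f0 f1 n 0 - qQT p lam al x f0 f1 n 1)" for n
  have fsum: "(\<Sum>n\<in>N. q n) \<le> Cg p \<Omega> * F" if N: "finite N" "N \<subseteq> {1..}" for N
  proof -
    have lim: "((\<lambda>K. \<Sum>n\<in>N. cmod ((\<Sum>k\<in>K. T n 0 k) - (\<Sum>k\<in>K. T n 1 k))) \<longlongrightarrow> (\<Sum>n\<in>N. q n))
        (finite_subsets_at_top {1..})"
      unfolding q_def qT by (intro tendsto_sum tendsto_norm tendsto_diff infsum_tendsto summ)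
    show ?thesis
      by (rule tendsto_upperbound[OF lim _ finite_subsets_at_top_neq_bot])
         (rule eventually_finite_subsets_at_top_weakI, rule perK, use N in auto)
  qed
  have s: "q summable_on {1..}"
  proof (rule nonneg_bdd_above_summable_on)
    show "0 \<le> q n" if "n \<in> {1..}" for n by (simp add: q_def)
    show "bdd_above (sum q ` {K. K \<subseteq> {1..} \<and> finite K})"
    proof (rule bdd_aboveI2[where M="Cg p \<Omega> * F"])
      fix K :: "nat set" assume "K \<in> {K. K \<subseteq> {1..} \<and> finite K}"
      then show "sum q K \<le> Cg p \<Omega> * F" by (intro fsum) auto
    qed
  qed
  have "infsum q {1..} \<le> Cg p \<Omega> * F"
    by (rule infsum_le_finite_sums[OF s fsum])
  then show ?thesis using s unfolding q_def F_def by simp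
qed


theorem lemma3p4:
  fixes p :: nat and \<Omega> :: real
  assumes "\<Omega> > 0"
  shows "\<exists>C. \<forall>lam al x f0 f1. in_B p \<Omega> lam al \<and> x \<in> {0..pi} \<and> in_m f0 f1 \<longrightarrow>
           (\<lambda>n. norm (qQT p lam al x f0 f1 n 0 - qQT p lam al x f0 f1 n 1)) summable_on {1..} \<and>
           (\<Sum>\<^sub>\<infinity>n\<in>{1..}. norm (qQT p lam al x f0 f1 n 0 - qQT p lam al x f0 f1 n 1))
              \<le> C * m_norm f0 f1"
proof -
  show ?thesis
    apply (rule exI[where x="Cg p \<Omega>"])
    apply (intro allI impI)
    apply (elim conjE)
    apply (rule main_fixed[OF assms])
    by assumption+
qed

end
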